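(* Any quantum algorithm that, given quantum query access to a component mixer on a set of $n$-bit strings, decides with bounded error whether there is more than one component (the multiple components problem) must make $\Omega(2^{n/2})$ queries.
   Context: Let $n\ge 1$ and let $S\subseteq\{0,1\}^n$ be partitioned into nonempty sets (components) $S_1,\dots,S_c$. A component mixer on this partition is a family of one-to-one maps $M_i:S\to S$ indexed by $i$ in a finite nonempty set $\mathrm{Ind}_M$ of strings of length polynomial in $n$, such that: (i) for every $i$, every $a$ and every $x\in S_a$, $M_i(x)\in S_a$; (ii) for every $a$ and every $x\in S_a$, if $i$ is chosen uniformly at random from $\mathrm{Ind}_M$, then the total variation distance between the distribution of $M_i(x)$ and the uniform distribution on $S_a$ is at most $2^{-n-2}$. Quantum query access means each of the following can be done coherently in one query with failure probability at most $2^{-n}$: test membership in $S$ or $\mathrm{Ind}_M$; prepare the uniform superposition over $S$ or over $\mathrm{Ind}_M$, or measure the projector onto it; apply $\mathrm{CM}|\alpha,i,s\rangle=|\alpha,i,M_i^{\alpha}(s)\rangle$ for $\alpha\in\{-1,0,1\}$ (identity on invalid inputs). *)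

theory Defs
  imports Complex_Main "HOL-Library.Disjoint_Sets"
begin

type_synonym bitstr = "bool list"

definition bitstrs :: "nat \<Rightarrow> bitstr set" where
  "bitstrs k = {xs. length xs = k}"

text \<open>Total variation distance between the distribution of M_i(x) (i uniform in Ind)
  and the uniform distribution on the component C (both supported on C).\<close>
definition mixer_tv :: "bitstr set \<Rightarrow> (bitstr \<Rightarrow> bitstr \<Rightarrow> bitstr) \<Rightarrow> bitstr set \<Rightarrow> bitstr \<Rightarrow> real" where
  "mixer_tv Ind M C x =
     (1/2) * (\<Sum>y\<in>C. \<bar>real (card {i\<in>Ind. M i x = y}) / real (card Ind) - 1 / real (card C)\<bar>)"

definition component_mixer ::
  "nat \<Rightarrow> nat \<Rightarrow> bitstr set \<Rightarrow> bitstr set set \<Rightarrow> bitstr set \<Rightarrow> (bitstr \<Rightarrow> bitstr \<Rightarrow> bitstr) \<Rightarrow> bool" where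
  "component_mixer n m S P Ind M \<longleftrightarrow>
     S \<subseteq> bitstrs n \<and> S \<noteq> {} \<and> partition_on S P \<and>
     Ind \<subseteq> bitstrs m \<and> Ind \<noteq> {} \<and>
     (\<forall>i\<in>Ind. inj_on (M i) S \<and> (\<forall>C\<in>P. \<forall>x\<in>C. M i x \<in> C)) \<and>
     (\<forall>C\<in>P. \<forall>x\<in>C. mixer_tv Ind M C x \<le> 2 powr (- real n - 2))"

text \<open>An operator on the space with (finite) orthonormal basis B is given by its matrix
  K x y = <x|K|y>; a state is a function from basis elements to amplitudes.\<close>
definition apply_op :: "'b set \<Rightarrow> ('b \<Rightarrow> 'b \<Rightarrow> complex) \<Rightarrow> ('b \<Rightarrow> complex) \<Rightarrow> 'b \<Rightarrow> complex" where
  "apply_op B K \<psi> x = (\<Sum>y\<in>B. K x y * \<psi> y)"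

definition unitary_on :: "'b set \<Rightarrow> ('b \<Rightarrow> 'b \<Rightarrow> complex) \<Rightarrow> bool" where
  "unitary_on B U \<longleftrightarrow>
     (\<forall>x\<in>B. \<forall>y\<in>B. (\<Sum>k\<in>B. cnj (U k x) * U k y) = (if x = y then 1 else 0))"

definition delta :: "'a \<Rightarrow> 'a \<Rightarrow> complex" where
  "delta x y = (if x = y then 1 else 0)"

definition unif_amp :: "'a set \<Rightarrow> 'a \<Rightarrow> real" where
  "unif_amp A x = (if x \<in> A then 1 / sqrt (real (card A)) else 0)"

text \<open>Householder reflection on the space with basis X exchanging the unit vectors
  |z> and |A> (uniform superposition over A); identity if they coincide.
  Maps |z> to |A>: this is the canonical preparation unitary.\<close>
definition prep_kernel :: "'a set \<Rightarrow> 'a \<Rightarrow> 'a set \<Rightarrow> 'a \<Rightarrow> 'a \<Rightarrow> complex" where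
  "prep_kernel X z A x y =
     (let d = (\<lambda>u. (if u = z then 1 else 0) - unif_amp A u);
          nrm2 = (\<Sum>u\<in>X. (d u)^2)
      in delta x y - (if nrm2 = 0 then 0 else complex_of_real (2 * d x * d y / nrm2)))"

definition proj_kernel :: "'a set \<Rightarrow> 'a \<Rightarrow> 'a \<Rightarrow> complex" where
  "proj_kernel A x y = complex_of_real (unif_amp A x * unif_amp A y)"

text \<open>Query register basis elements (op, a, i, s, b): op \<in> {0..7} selects the operation
  (coherently, so superpositions/controlled uses are allowed), a \<in> {0,1,2} encodes
  alpha = a - 1, i is an m-bit index string, s an n-bit string, b an answer bit.\<close>
type_synonym qreg = "nat \<times> nat \<times> bitstr \<times> bitstr \<times> bool"

definition qbasis :: "nat \<Rightarrow> nat \<Rightarrow> qreg set" where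
  "qbasis n m = {..<8} \<times> {..<3} \<times> bitstrs m \<times> bitstrs n \<times> UNIV"

text \<open>M_i^alpha on s (alpha = a - 1), identity on invalid inputs.\<close>
definition mix_pow :: "bitstr set \<Rightarrow> bitstr set \<Rightarrow> (bitstr \<Rightarrow> bitstr \<Rightarrow> bitstr) \<Rightarrow> nat \<Rightarrow> bitstr \<Rightarrow> bitstr \<Rightarrow> bitstr" where
  "mix_pow S Ind M a i s =
     (if i \<in> Ind \<and> s \<in> S then
        (if a = 0 then the_inv_into S (M i) s else if a = 1 then s else M i s)
      else s)"

definition oracle_kernel ::
  "nat \<Rightarrow> nat \<Rightarrow> bitstr set \<Rightarrow> bitstr set \<Rightarrow> (bitstr \<Rightarrow> bitstr \<Rightarrow> bitstr) \<Rightarrow> qreg \<Rightarrow> qreg \<Rightarrow> complex" where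
  "oracle_kernel n m S Ind M q' q =
     (case q' of (op', a', i', s', b') \<Rightarrow> case q of (op, a, i, s, b) \<Rightarrow>
      if op' \<noteq> op then 0 else
      if op = 1 then delta (a', i', s', b') (a, i, s, b \<noteq> (s \<in> S))
      else if op = 2 then delta (a', i', s', b') (a, i, s, b \<noteq> (i \<in> Ind))
      else if op = 3 then delta (a', i', b') (a, i, b) * prep_kernel (bitstrs n) (replicate n False) S s' s
      else if op = 4 then delta (a', s', b') (a, s, b) * prep_kernel (bitstrs m) (replicate m False) Ind i' i
      else if op = 5 then delta (a', i') (a, i) *
          (proj_kernel S s' s * delta b' (\<not> b) + (delta s' s - proj_kernel S s' s) * delta b' b)
      else if op = 6 then delta (a', s') (a, s) *
          (proj_kernel Ind i' i * delta b' (\<not> b) + (delta i' i - proj_kernel Ind i' i) * delta b' b)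
      else if op = 7 then delta (a', i', s', b') (a, i, mix_pow S Ind M a i s, b)
      else delta (a', i', s', b') (a, i, s, b))"

definition full_basis :: "nat \<Rightarrow> nat \<Rightarrow> nat \<Rightarrow> (qreg \<times> nat) set" where
  "full_basis n m w = qbasis n m \<times> {..<w}"

definition full_oracle ::
  "nat \<Rightarrow> nat \<Rightarrow> bitstr set \<Rightarrow> bitstr set \<Rightarrow> (bitstr \<Rightarrow> bitstr \<Rightarrow> bitstr) \<Rightarrow> qreg \<times> nat \<Rightarrow> qreg \<times> nat \<Rightarrow> complex" where
  "full_oracle n m S Ind M x y =
     (if snd x = snd y then oracle_kernel n m S Ind M (fst x) (fst y) else 0)"

definition init_state :: "nat \<Rightarrow> nat \<Rightarrow> qreg \<times> nat \<Rightarrow> complex" where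
  "init_state n m x = (if x = ((0, 0, replicate m False, replicate n False, False), 0) then 1 else 0)"

fun run_state ::
  "nat \<Rightarrow> nat \<Rightarrow> nat \<Rightarrow> (nat \<Rightarrow> qreg \<times> nat \<Rightarrow> qreg \<times> nat \<Rightarrow> complex) \<Rightarrow>
   bitstr set \<Rightarrow> bitstr set \<Rightarrow> (bitstr \<Rightarrow> bitstr \<Rightarrow> bitstr) \<Rightarrow> nat \<Rightarrow> qreg \<times> nat \<Rightarrow> complex" where
  "run_state n m w U S Ind M 0 = apply_op (full_basis n m w) (U 0) (init_state n m)"
| "run_state n m w U S Ind M (Suc k) =
     apply_op (full_basis n m w) (U (Suc k))
       (apply_op (full_basis n m w) (full_oracle n m S Ind M) (run_state n m w U S Ind M k))"

definition accept_prob ::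
  "nat \<Rightarrow> nat \<Rightarrow> nat \<Rightarrow> nat \<Rightarrow> (nat \<Rightarrow> qreg \<times> nat \<Rightarrow> qreg \<times> nat \<Rightarrow> complex) \<Rightarrow> (qreg \<times> nat) set \<Rightarrow>
   bitstr set \<Rightarrow> bitstr set \<Rightarrow> (bitstr \<Rightarrow> bitstr \<Rightarrow> bitstr) \<Rightarrow> real" where
  "accept_prob n m w T U Acc S Ind M = (\<Sum>x\<in>Acc. (cmod (run_state n m w U S Ind M T x))^2)"

definition solves_multiple_components ::
  "nat \<Rightarrow> nat \<Rightarrow> nat \<Rightarrow> nat \<Rightarrow> (nat \<Rightarrow> qreg \<times> nat \<Rightarrow> qreg \<times> nat \<Rightarrow> complex) \<Rightarrow> (qreg \<times> nat) set \<Rightarrow> bool" where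
  "solves_multiple_components n m w T U Acc \<longleftrightarrow>
     0 < w \<and> (\<forall>k\<le>T. unitary_on (full_basis n m w) (U k)) \<and> Acc \<subseteq> full_basis n m w \<and>
     (\<forall>S P Ind M. component_mixer n m S P Ind M \<longrightarrow>
        (card P \<ge> 2 \<longrightarrow> accept_prob n m w T U Acc S Ind M \<ge> 2/3) \<and>
        (card P < 2 \<longrightarrow> accept_prob n m w T U Acc S Ind M \<le> 1/3))"

end

theory Submission
  imports Defs "HOL-Analysis.L2_Norm"
begin

definition nrm :: "'b set \<Rightarrow> ('b \<Rightarrow> complex) \<Rightarrow> real" where
  "nrm B \<phi> = L2_set (\<lambda>x. cmod (\<phi> x)) B"

lemma nrm_nonneg[simp]: "0 \<le> nrm B \<phi>" by (simp add: nrm_def)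

lemma nrm_sq: "finite B \<Longrightarrow> (nrm B \<phi>)^2 = (\<Sum>x\<in>B. (cmod (\<phi> x))^2)"
  unfolding nrm_def L2_set_def by (simp add: sum_nonneg)

lemma nrm_add: "nrm B (\<lambda>x. \<phi> x + \<psi> x) \<le> nrm B \<phi> + nrm B \<psi>"
proof -
  have "nrm B (\<lambda>x. \<phi> x + \<psi> x) \<le> L2_set (\<lambda>x. cmod (\<phi> x) + cmod (\<psi> x)) B"
    unfolding nrm_def by (rule L2_set_mono) (auto simp: norm_triangle_ineq)
  also have "\<dots> \<le> nrm B \<phi> + nrm B \<psi>" unfolding nrm_def by (rule L2_set_triangle_ineq)
  finally show ?thesis .
qed

lemma nrm_diff: "nrm B (\<lambda>x. \<phi> x - \<psi> x) \<le> nrm B \<phi> + nrm B \<psi>"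
proof -
  have "nrm B (\<lambda>x. \<phi> x - \<psi> x) \<le> L2_set (\<lambda>x. cmod (\<phi> x) + cmod (\<psi> x)) B"
    unfolding nrm_def by (rule L2_set_mono) (auto simp: norm_triangle_ineq4)
  also have "\<dots> \<le> nrm B \<phi> + nrm B \<psi>" unfolding nrm_def by (rule L2_set_triangle_ineq)
  finally show ?thesis .
qed

lemma nrm_cong: "(\<And>x. x \<in> B \<Longrightarrow> \<phi> x = \<psi> x) \<Longrightarrow> nrm B \<phi> = nrm B \<psi>"
  unfolding nrm_def by (rule L2_set_cong) auto

lemma apply_op_diff: "apply_op B K (\<lambda>x. \<phi> x - \<psi> x) x = apply_op B K \<phi> x - apply_op B K \<psi> x"
  unfolding apply_op_def by (simp add: sum_subtractf right_diff_distrib)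

lemma apply_op_add: "apply_op B K (\<lambda>x. \<phi> x + \<psi> x) x = apply_op B K \<phi> x + apply_op B K \<psi> x"
  unfolding apply_op_def by (simp add: sum.distrib distrib_left)

lemma unitary_sq:
  assumes fin: "finite B" and U: "unitary_on B U"
  shows "(\<Sum>x\<in>B. (cmod (apply_op B U \<phi> x))^2) = (\<Sum>x\<in>B. (cmod (\<phi> x))^2)"
proof -
  have "complex_of_real (\<Sum>x\<in>B. (cmod (apply_op B U \<phi> x))^2)
      = (\<Sum>x\<in>B. cnj (apply_op B U \<phi> x) * apply_op B U \<phi> x)"
    unfolding of_real_sum by (intro sum.cong refl) (metis complex_norm_square mult.commute)
  also have "\<dots> = (\<Sum>x\<in>B. \<Sum>y'\<in>B. \<Sum>y\<in>B. (\<phi> y * cnj (\<phi> y')) * (cnj (U x y') * U x y))"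
    unfolding apply_op_def cnj_sum sum_product by (intro sum.cong refl) (simp add: mult_ac)
  also have "\<dots> = (\<Sum>y'\<in>B. \<Sum>x\<in>B. \<Sum>y\<in>B. (\<phi> y * cnj (\<phi> y')) * (cnj (U x y') * U x y))"
    by (rule sum.swap)
  also have "\<dots> = (\<Sum>y'\<in>B. \<Sum>y\<in>B. \<Sum>x\<in>B. (\<phi> y * cnj (\<phi> y')) * (cnj (U x y') * U x y))"
    by (rule sum.cong[OF refl], rule sum.swap)
  also have "\<dots> = (\<Sum>y'\<in>B. \<Sum>y\<in>B. (\<phi> y * cnj (\<phi> y')) * (\<Sum>x\<in>B. cnj (U x y') * U x y))"
    by (simp only: sum_distrib_left)
  also have "\<dots> = (\<Sum>y'\<in>B. \<Sum>y\<in>B. (\<phi> y * cnj (\<phi> y')) * (if y' = y then 1 else 0))"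
    using U unfolding unitary_on_def by (intro sum.cong refl) auto
  also have "\<dots> = (\<Sum>y'\<in>B. cnj (\<phi> y') * \<phi> y')"
    by (intro sum.cong refl) (simp add: fin if_distrib mult.commute cong: if_cong)
  also have "\<dots> = complex_of_real (\<Sum>x\<in>B. (cmod (\<phi> x))^2)"
    unfolding of_real_sum by (intro sum.cong refl) (metis complex_norm_square mult.commute)
  finally show ?thesis by (simp only: of_real_eq_iff)
qed

lemma unitary_nrm:
  assumes "finite B" "unitary_on B U"
  shows "nrm B (apply_op B U \<phi>) = nrm B \<phi>"
  using unitary_sq[OF assms] unfolding nrm_def L2_set_def by simp

lemma if01_mult[simp]: "(if P then 1 else 0) * a = (if P then a else (0::'a::semiring_1))"
  "a * (if P then 1 else 0) = (if P then a else (0::'a::semiring_1))" by auto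

lemma sum_focus:
  assumes "finite B" "inj_on g C" "g ` C \<subseteq> B" "\<And>k. k \<in> B \<Longrightarrow> k \<notin> g ` C \<Longrightarrow> F k = 0"
  shows "sum F B = (\<Sum>c\<in>C. F (g c))"
proof -
  have "sum F B = sum F (g ` C)"
    using assms by (intro sum.mono_neutral_right) auto
  also have "\<dots> = (\<Sum>c\<in>C. F (g c))" using assms(2) by (simp add: sum.reindex)
  finally show ?thesis .
qed

lemma sum_delta_prod:
  assumes "finite B"
  shows "(\<Sum>k\<in>B. cnj (if k = p then 1 else 0) * (if k = q then 1 else (0::complex)))
       = (if p = q \<and> p \<in> B then 1 else 0)"
  using assms by (simp cong: if_cong)

lemma finite_bitstrs[simp]: "finite (bitstrs k)"
proof -
  have "bitstrs k = {xs. set xs \<subseteq> UNIV \<and> length xs = k}" by (simp add: bitstrs_def)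
  then show ?thesis using finite_lists_length_eq[of "UNIV :: bool set" k] by simp
qed

lemma card_bitstrs: "card (bitstrs k) = 2 ^ k"
proof -
  have "bitstrs k = {xs. set xs \<subseteq> UNIV \<and> length xs = k}" by (simp add: bitstrs_def)
  then show ?thesis using card_lists_length_eq[of "UNIV :: bool set" k] by simp
qed

lemma replicate_bitstrs[simp]: "replicate k b \<in> bitstrs k"
  by (simp add: bitstrs_def)

lemma mem_bitstrs[simp]: "xs \<in> bitstrs k \<longleftrightarrow> length xs = k"
  by (simp add: bitstrs_def)

lemma sum_delta_left_real:
  assumes "finite X" "x \<in> X"
  shows "(\<Sum>k\<in>X. (if k = x then 1 else 0) * f k) = (f x :: real)"
  using assms by (simp cong: if_cong)

lemma householder_real:
  fixes d :: "'a \<Rightarrow> real"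
  assumes fin: "finite X" and x: "x \<in> X" and y: "y \<in> X"
  defines "nrm2 \<equiv> (\<Sum>u\<in>X. (d u)^2)"
  defines "h \<equiv> \<lambda>a b. (if a = b then 1 else 0) - (if nrm2 = 0 then 0 else 2 * d a * d b / nrm2)"
  shows "(\<Sum>k\<in>X. h k x * h k y) = (if x = y then 1 else 0)"
proof (cases "nrm2 = 0")
  case True
  then show ?thesis using fin x y by (simp add: h_def cong: if_cong)
next
  case False
  define c where "c = 2 / nrm2"
  define dl where "dl = (\<lambda>(a::'a) b. if a = b then 1 else (0::real))"
  have h: "h a b = dl a b - c * d a * d b" for a b
    using False by (simp add: h_def c_def dl_def)
  have pw: "h k x * h k y = dl k x * dl k y - c * d y * (dl k x * d k) - c * d x * (dl k y * d k)
       + c * c * d x * d y * (d k)^2" for k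
    unfolding h by (simp add: algebra_simps power2_eq_square)
  have s1: "(\<Sum>k\<in>X. dl k x * dl k y) = dl x y" using fin x y by (simp add: dl_def cong: if_cong)
  have s2: "(\<Sum>k\<in>X. dl k x * d k) = d x" using fin x by (simp add: dl_def cong: if_cong)
  have s3: "(\<Sum>k\<in>X. dl k y * d k) = d y" using fin y by (simp add: dl_def cong: if_cong)
  have "(\<Sum>k\<in>X. h k x * h k y) =
      (\<Sum>k\<in>X. dl k x * dl k y) - c * d y * (\<Sum>k\<in>X. dl k x * d k)
      - c * d x * (\<Sum>k\<in>X. dl k y * d k) + c * c * d x * d y * nrm2"
    unfolding pw nrm2_def by (simp add: sum.distrib sum_subtractf sum_distrib_left)
  also have "\<dots> = dl x y - c * d y * d x - c * d x * d y + c * c * d x * d y * nrm2"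
    using s1 s2 s3 by simp
  also have "c * c * d x * d y * nrm2 = 2 * c * d x * d y" using False by (simp add: c_def)
  finally show ?thesis by (simp add: algebra_simps dl_def)
qed

lemma prep_unitary:
  assumes fin: "finite X"
  shows "unitary_on X (prep_kernel X z A)"
  unfolding unitary_on_def
proof (intro ballI)
  fix x y assume x: "x \<in> X" and y: "y \<in> X"
  define d where "d = (\<lambda>u. (if u = z then 1 else 0) - unif_amp A u)"
  define nrm2 where "nrm2 = (\<Sum>u\<in>X. (d u)^2)"
  define h where "h = (\<lambda>a b. (if a = b then 1 else 0) - (if nrm2 = 0 then 0 else 2 * d a * d b / nrm2))"
  have pk: "prep_kernel X z A a b = complex_of_real (h a b)" for a b
    unfolding prep_kernel_def h_def nrm2_def d_def delta_def Let_def by simp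
  have "(\<Sum>k\<in>X. cnj (prep_kernel X z A k x) * prep_kernel X z A k y)
      = complex_of_real (\<Sum>k\<in>X. h k x * h k y)"
    by (simp add: pk)
  also have "\<dots> = (if x = y then 1 else 0)"
    using householder_real[OF fin x y, of d] unfolding h_def nrm2_def by simp
  finally show "(\<Sum>k\<in>X. cnj (prep_kernel X z A k x) * prep_kernel X z A k y) = (if x = y then 1 else 0)" .
qed

lemma sum_X_bool:
  "(\<Sum>c\<in>X \<times> (UNIV::bool set). f c) = (\<Sum>s\<in>X. f (s, True) + f (s, False))"
proof -
  have "(\<Sum>c\<in>X \<times> (UNIV::bool set). f c) = (\<Sum>s\<in>X. \<Sum>b\<in>UNIV. f (s, b))"
    by (simp add: sum.cartesian_product)
  also have "\<dots> = (\<Sum>s\<in>X. f (s, True) + f (s, False))"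
    by (simp add: UNIV_bool add.commute)
  finally show ?thesis .
qed

lemma unif_sq_sum:
  assumes "finite X" "A \<subseteq> X" "A \<noteq> {}"
  shows "(\<Sum>k\<in>X. (unif_amp A k)^2) = 1"
proof -
  have fA: "finite A" using assms finite_subset by blast
  have "(\<Sum>k\<in>X. (unif_amp A k)^2) = (\<Sum>k\<in>A. (unif_amp A k)^2)"
    using assms fA by (intro sum.mono_neutral_right) (auto simp: unif_amp_def)
  also have "\<dots> = (\<Sum>k\<in>A. 1 / real (card A))"
    by (intro sum.cong refl) (simp add: unif_amp_def power_divide)
  also have "\<dots> = 1" using fA assms(3) by simp
  finally show ?thesis .
qed

lemma proj_block_unitary:
  assumes fin: "finite X" and AX: "A \<subseteq> X" and Ane: "A \<noteq> {}"
  defines "V \<equiv> \<lambda>(s', b'::bool) (s, b). proj_kernel A s' s * delta b' (\<not> b) + (delta s' s - proj_kernel A s' s) * delta b' b"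
  shows "unitary_on (X \<times> UNIV) V"
  unfolding unitary_on_def
proof (intro ballI)
  fix x y assume x: "x \<in> X \<times> (UNIV::bool set)" and y: "y \<in> X \<times> (UNIV::bool set)"
  obtain s b where xs: "x = (s, b)" by (cases x)
  obtain s2 b2 where ys: "y = (s2, b2)" by (cases y)
  have s: "s \<in> X" and s2: "s2 \<in> X" using x y xs ys by auto
  define u where "u = unif_amp A"
  define p where "p = (\<lambda>a c. u a * u c)"
  define dl where "dl = (\<lambda>(a::'a) c. if a = c then 1 else (0::real))"
  have uu: "(\<Sum>k\<in>X. u k * u k) = 1" using unif_sq_sum[OF fin AX Ane] by (simp add: u_def power2_eq_square)
  have pp: "(\<Sum>k\<in>X. p k a * p k c) = p a c" for a c
  proof -
    have "(\<Sum>k\<in>X. p k a * p k c) = u a * u c * (\<Sum>k\<in>X. u k * u k)"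
      by (simp add: p_def sum_distrib_left mult_ac)
    then show ?thesis using uu by (simp add: p_def)
  qed
  have dp: "(\<Sum>k\<in>X. dl k a * p k c) = p a c" if "a \<in> X" for a c
    using fin that by (simp add: dl_def cong: if_cong)
  have pd: "(\<Sum>k\<in>X. p k a * dl k c) = p c a" if "c \<in> X" for a c
    using fin that by (simp add: dl_def cong: if_cong)
  have dd: "(\<Sum>k\<in>X. dl k a * dl k c) = dl a c" if "a \<in> X" for a c
    using fin that by (auto simp: dl_def cong: if_cong)
  have psym: "p a c = p c a" for a c by (simp add: p_def mult.commute)
  have Vr: "V (s', b') (t, bb) = complex_of_real (p s' t * (if b' = (\<not> bb) then 1 else 0) + (dl s' t - p s' t) * (if b' = bb then 1 else 0))" for s' b' t bb
    by (simp add: V_def proj_kernel_def delta_def p_def u_def dl_def)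
  have "(\<Sum>k\<in>X \<times> UNIV. cnj (V k x) * V k y) = complex_of_real
        (\<Sum>s'\<in>X. (p s' s * (if True = (\<not> b) then 1 else 0) + (dl s' s - p s' s) * (if True = b then 1 else 0)) *
                  (p s' s2 * (if True = (\<not> b2) then 1 else 0) + (dl s' s2 - p s' s2) * (if True = b2 then 1 else 0))
               + (p s' s * (if False = (\<not> b) then 1 else 0) + (dl s' s - p s' s) * (if False = b then 1 else 0)) *
                  (p s' s2 * (if False = (\<not> b2) then 1 else 0) + (dl s' s2 - p s' s2) * (if False = b2 then 1 else 0)))"
    unfolding sum_X_bool xs ys Vr by simp
  also have "\<dots> = (if x = y then 1 else 0)"
  proof (cases "b2 = b")
    case True
    have e: "(\<Sum>s'\<in>X. p s' s * p s' s2 + (dl s' s - p s' s) * (dl s' s2 - p s' s2)) = dl s s2"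
      using pp[of s s2] dp[OF s, of s2] pd[OF s2, of s] dd[OF s, of s2] psym[of s s2]
      by (simp add: algebra_simps sum.distrib sum_subtractf sum_distrib_left[symmetric])
    show ?thesis using True e by (cases b) (auto simp: xs ys dl_def add.commute)
  next
    case False
    have e: "(\<Sum>s'\<in>X. p s' s * (dl s' s2 - p s' s2) + (dl s' s - p s' s) * p s' s2) = 0"
      using pp[of s s2] dp[OF s, of s2] pd[OF s2, of s] dd[OF s, of s2] psym[of s s2]
      by (simp add: algebra_simps sum.distrib sum_subtractf sum_distrib_left[symmetric])
    have "b2 = (\<not> b)" using False by auto
    then show ?thesis using False e by (cases b) (auto simp: xs ys algebra_simps)
  qed
  finally show "(\<Sum>k\<in>X \<times> UNIV. cnj (V k x) * V k y) = (if x = y then 1 else 0)" .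
qed

definition V5 :: "'a set \<Rightarrow> ('a \<times> bool) \<Rightarrow> ('a \<times> bool) \<Rightarrow> complex" where
  "V5 A = (\<lambda>(s', b') (s, b). proj_kernel A s' s * delta b' (\<not> b) + (delta s' s - proj_kernel A s' s) * delta b' b)"

lemma V5_unitary: "finite X \<Longrightarrow> A \<subseteq> X \<Longrightarrow> A \<noteq> {} \<Longrightarrow> unitary_on (X \<times> UNIV) (V5 A)"
  unfolding V5_def by (rule proj_block_unitary)

lemma qbasis_mem[simp]: "(c, a, i, s, b) \<in> qbasis n m \<longleftrightarrow> c < 8 \<and> a < 3 \<and> length i = m \<and> length s = n"
  by (simp add: qbasis_def)

lemma finite_qbasis[simp]: "finite (qbasis n m)"
  unfolding qbasis_def by simp


lemma perm_col:
  assumes "finite Q" "\<And>k. Kk k x = (if k = p then 1 else 0)" "\<And>k. Kk k y = (if k = q then 1 else 0)"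
    "p \<in> Q" "p = q \<longleftrightarrow> x = y"
  shows "(\<Sum>k\<in>Q. cnj (Kk k x) * Kk k y) = (if x = y then 1 else (0::complex))"
  using assms sum_delta_prod[OF assms(1), of p q] by simp

lemma zero_col:
  assumes "\<And>k. k \<in> Q \<Longrightarrow> Kk k x = 0 \<or> Kk k y = 0" "x \<noteq> y"
  shows "(\<Sum>k\<in>Q. cnj (Kk k x) * Kk k y) = (if x = y then 1 else (0::complex))"
  using assms by (auto intro!: sum.neutral)

context
  fixes n m :: nat and S Ind :: "bitstr set" and M :: "bitstr \<Rightarrow> bitstr \<Rightarrow> bitstr"
begin

abbreviation "OK \<equiv> oracle_kernel n m S Ind M"

lemma OK_op_other:
  "c \<noteq> 1 \<Longrightarrow> c \<noteq> 2 \<Longrightarrow> c \<noteq> 3 \<Longrightarrow> c \<noteq> 4 \<Longrightarrow> c \<noteq> 5 \<Longrightarrow> c \<noteq> 6 \<Longrightarrow> c \<noteq> 7 \<Longrightarrow>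
   OK k (c, a, i, s, b) = (if k = (c, a, i, s, b) then 1 else 0)"
  by (cases k) (auto simp: oracle_kernel_def delta_def)

lemma OK_op1: "OK k (1, a, i, s, b) = (if k = (1, a, i, s, b \<noteq> (s \<in> S)) then 1 else 0)"
  by (cases k) (auto simp: oracle_kernel_def delta_def)

lemma OK_op2: "OK k (2, a, i, s, b) = (if k = (2, a, i, s, b \<noteq> (i \<in> Ind)) then 1 else 0)"
  by (cases k) (auto simp: oracle_kernel_def delta_def)

lemma OK_op7: "OK k (7, a, i, s, b) = (if k = (7, a, i, mix_pow S Ind M a i s, b) then 1 else 0)"
  by (cases k) (auto simp: oracle_kernel_def delta_def)

lemma OK_op3: "OK (c', a', i', s', b') (3, a, i, s, b) =
   (if c' = 3 \<and> a' = a \<and> i' = i \<and> b' = b then prep_kernel (bitstrs n) (replicate n False) S s' s else 0)"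
  by (auto simp: oracle_kernel_def delta_def)

lemma OK_op4: "OK (c', a', i', s', b') (4, a, i, s, b) =
   (if c' = 4 \<and> a' = a \<and> s' = s \<and> b' = b then prep_kernel (bitstrs m) (replicate m False) Ind i' i else 0)"
  by (auto simp: oracle_kernel_def delta_def)

lemma OK_op5: "OK (c', a', i', s', b') (5, a, i, s, b) =
   (if c' = 5 \<and> a' = a \<and> i' = i then V5 S (s', b') (s, b) else 0)"
  by (auto simp: oracle_kernel_def delta_def V5_def)

lemma OK_op6: "OK (c', a', i', s', b') (6, a, i, s, b) =
   (if c' = 6 \<and> a' = a \<and> s' = s then V5 Ind (i', b') (i, b) else 0)"
  by (auto simp: oracle_kernel_def delta_def V5_def)

lemma OK_nz: "OK k x \<noteq> 0 \<Longrightarrow> fst k = fst x"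
  by (cases k; cases x) (auto simp: oracle_kernel_def split: if_splits)


lemma OK_unitary:
  assumes SX: "S \<subseteq> bitstrs n" "S \<noteq> {}" and IX: "Ind \<subseteq> bitstrs m" "Ind \<noteq> {}"
    and mp: "\<And>a i. a < 3 \<Longrightarrow> i \<in> bitstrs m \<Longrightarrow>
       (\<forall>s\<in>bitstrs n. mix_pow S Ind M a i s \<in> bitstrs n) \<and> inj_on (mix_pow S Ind M a i) (bitstrs n)"
  shows "unitary_on (qbasis n m) OK"
  unfolding unitary_on_def
proof (intro ballI)
  fix x y assume xQ: "x \<in> qbasis n m" and yQ: "y \<in> qbasis n m"
  obtain c a i s b where x: "x = (c, a, i, s, b)" by (cases x) auto
  obtain c2 a2 i2 s2 b2 where y: "y = (c2, a2, i2, s2, b2)" by (cases y) auto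
  have xb: "c < 8" "a < 3" "length i = m" "length s = n" using xQ x by auto
  have yb: "c2 < 8" "a2 < 3" "length i2 = m" "length s2 = n" using yQ y by auto
  let ?Q = "qbasis n m"
  show "(\<Sum>k\<in>?Q. cnj (OK k x) * OK k y) = (if x = y then 1 else 0)"
  proof (cases "c = c2")
    case False
    show ?thesis
    proof (rule zero_col)
      fix k show "OK k x = 0 \<or> OK k y = 0" using OK_nz[of k x] OK_nz[of k y] False x y by auto
    next
      show "x \<noteq> y" using False x y by auto
    qed
  next
    case True
    hence c2: "c2 = c" by simp
    consider "c = 1" | "c = 2" | "c = 3" | "c = 4" | "c = 5" | "c = 6" | "c = 7"
      | "c \<noteq> 1" "c \<noteq> 2" "c \<noteq> 3" "c \<noteq> 4" "c \<noteq> 5" "c \<noteq> 6" "c \<noteq> 7" by blast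
    then show ?thesis
    proof cases
      case 1
      let ?p = "(1::nat, a, i, s, b \<noteq> (s \<in> S))" and ?q = "(1::nat, a2, i2, s2, b2 \<noteq> (s2 \<in> S))"
      have hx: "\<And>k. OK k x = (if k = ?p then 1 else 0)" unfolding x 1 by (rule OK_op1)
      have hy: "\<And>k. OK k y = (if k = ?q then 1 else 0)" unfolding y c2 1 by (rule OK_op1)
      have pQ: "?p \<in> ?Q" using xb by simp
      have iff: "?p = ?q \<longleftrightarrow> x = y" using x y c2 1 by auto
      show ?thesis by (rule perm_col[OF finite_qbasis hx hy pQ iff])
    next
      case 2
      let ?p = "(2::nat, a, i, s, b \<noteq> (i \<in> Ind))" and ?q = "(2::nat, a2, i2, s2, b2 \<noteq> (i2 \<in> Ind))"
      have hx: "\<And>k. OK k x = (if k = ?p then 1 else 0)" unfolding x 2 by (rule OK_op2)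
      have hy: "\<And>k. OK k y = (if k = ?q then 1 else 0)" unfolding y c2 2 by (rule OK_op2)
      have pQ: "?p \<in> ?Q" using xb by simp
      have iff: "?p = ?q \<longleftrightarrow> x = y" using x y c2 2 by auto
      show ?thesis by (rule perm_col[OF finite_qbasis hx hy pQ iff])
    next
      case 7
      have inj: "inj_on (mix_pow S Ind M a i) (bitstrs n)" and into: "mix_pow S Ind M a i s \<in> bitstrs n"
        using mp[of a i] xb by auto
      let ?p = "(7::nat, a, i, mix_pow S Ind M a i s, b)" and ?q = "(7::nat, a2, i2, mix_pow S Ind M a2 i2 s2, b2)"
      have hx: "\<And>k. OK k x = (if k = ?p then 1 else 0)" unfolding x 7 by (rule OK_op7)
      have hy: "\<And>k. OK k y = (if k = ?q then 1 else 0)" unfolding y c2 7 by (rule OK_op7)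
      have pQ: "?p \<in> ?Q" using xb into by simp
      have e: "mix_pow S Ind M a i s = mix_pow S Ind M a i s2 \<longleftrightarrow> s = s2"
        using inj xb yb by (auto dest: inj_onD)
      have iff: "?p = ?q \<longleftrightarrow> x = y" using x y c2 7 e by auto
      show ?thesis by (rule perm_col[OF finite_qbasis hx hy pQ iff])
    next
      case 8
      have hx: "\<And>k. OK k x = (if k = x then 1 else 0)" unfolding x by (rule OK_op_other) (use 8 in auto)
      have hy: "\<And>k. OK k y = (if k = y then 1 else 0)" unfolding y c2 by (rule OK_op_other) (use 8 in auto)
      show ?thesis by (rule perm_col[OF finite_qbasis hx hy xQ]) simp
    next
      case 3
      show ?thesis
      proof (cases "a2 = a \<and> i2 = i \<and> b2 = b")
        case False
        show ?thesis
        proof (rule zero_col)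
          fix k show "OK k x = 0 \<or> OK k y = 0" using False x y c2 3 by (cases k) (auto simp: OK_op3)
        next
          show "x \<noteq> y" using False x y by auto
        qed
      next
        case True
        have "(\<Sum>k\<in>?Q. cnj (OK k x) * OK k y) =
              (\<Sum>t\<in>bitstrs n. cnj (OK (3, a, i, t, b) x) * OK (3, a, i, t, b) y)"
        proof (rule sum_focus[where g = "\<lambda>t. (3, a, i, t, b)"])
          show "inj_on (\<lambda>t. (3, a, i, t, b)) (bitstrs n)" by (auto simp: inj_on_def)
          show "(\<lambda>t. (3, a, i, t, b)) ` (bitstrs n) \<subseteq> ?Q" using xb by auto
          fix k assume kQ: "k \<in> ?Q" and kn: "k \<notin> (\<lambda>t. (3, a, i, t, b)) ` (bitstrs n)"
          obtain c' a' i' s' b' where k: "k = (c', a', i', s', b')" by (cases k) auto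
          have "length s' = n" "length i' = m" using kQ k by auto
          hence "\<not> (c' = 3 \<and> a' = a \<and> i' = i \<and> b' = b)" using kn k by (auto simp: image_iff)
          hence "OK k x = 0" unfolding k x 3 OK_op3 by auto
          thus "cnj (OK k x) * OK k y = 0" by simp
        qed simp
        also have "\<dots> = (\<Sum>t\<in>bitstrs n. cnj (prep_kernel (bitstrs n) (replicate n False) S t s)
                  * prep_kernel (bitstrs n) (replicate n False) S t s2)"
          using True x y c2 3 by (simp add: OK_op3)
        also have "\<dots> = (if s = s2 then 1 else 0)"
          using prep_unitary[of "bitstrs n" "replicate n False" S] xb yb unfolding unitary_on_def by simp
        finally show ?thesis using True x y c2 by auto
      qed
    next
      case 4
      show ?thesis
      proof (cases "a2 = a \<and> s2 = s \<and> b2 = b")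
        case False
        show ?thesis
        proof (rule zero_col)
          fix k show "OK k x = 0 \<or> OK k y = 0" using False x y c2 4 by (cases k) (auto simp: OK_op4)
        next
          show "x \<noteq> y" using False x y by auto
        qed
      next
        case True
        have "(\<Sum>k\<in>?Q. cnj (OK k x) * OK k y) =
              (\<Sum>t\<in>bitstrs m. cnj (OK (4, a, t, s, b) x) * OK (4, a, t, s, b) y)"
        proof (rule sum_focus[where g = "\<lambda>t. (4, a, t, s, b)"])
          show "inj_on (\<lambda>t. (4, a, t, s, b)) (bitstrs m)" by (auto simp: inj_on_def)
          show "(\<lambda>t. (4, a, t, s, b)) ` (bitstrs m) \<subseteq> ?Q" using xb by auto
          fix k assume kQ: "k \<in> ?Q" and kn: "k \<notin> (\<lambda>t. (4, a, t, s, b)) ` (bitstrs m)"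
          obtain c' a' i' s' b' where k: "k = (c', a', i', s', b')" by (cases k) auto
          have "length s' = n" "length i' = m" using kQ k by auto
          hence "\<not> (c' = 4 \<and> a' = a \<and> s' = s \<and> b' = b)" using kn k by (auto simp: image_iff)
          hence "OK k x = 0" unfolding k x 4 OK_op4 by auto
          thus "cnj (OK k x) * OK k y = 0" by simp
        qed simp
        also have "\<dots> = (\<Sum>t\<in>bitstrs m. cnj (prep_kernel (bitstrs m) (replicate m False) Ind t i)
                  * prep_kernel (bitstrs m) (replicate m False) Ind t i2)"
          using True x y c2 4 by (simp add: OK_op4)
        also have "\<dots> = (if i = i2 then 1 else 0)"
          using prep_unitary[of "bitstrs m" "replicate m False" Ind] xb yb unfolding unitary_on_def by simp
        finally show ?thesis using True x y c2 by auto
      qed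
    next
      case 5
      show ?thesis
      proof (cases "a2 = a \<and> i2 = i")
        case False
        show ?thesis
        proof (rule zero_col)
          fix k show "OK k x = 0 \<or> OK k y = 0" using False x y c2 5 by (cases k) (auto simp: OK_op5)
        next
          show "x \<noteq> y" using False x y by auto
        qed
      next
        case True
        have "(\<Sum>k\<in>?Q. cnj (OK k x) * OK k y) =
              (\<Sum>t\<in>bitstrs n \<times> UNIV. cnj (OK (5, a, i, fst t, snd t) x) * OK (5, a, i, fst t, snd t) y)"
        proof (rule sum_focus[where g = "\<lambda>t. (5, a, i, fst t, snd t)"])
          show "inj_on (\<lambda>t. (5, a, i, fst t, snd t)) (bitstrs n \<times> UNIV)" by (auto simp: inj_on_def)
          show "(\<lambda>t. (5, a, i, fst t, snd t)) ` (bitstrs n \<times> UNIV) \<subseteq> ?Q" using xb by auto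
          fix k assume kQ: "k \<in> ?Q" and kn: "k \<notin> (\<lambda>t. (5, a, i, fst t, snd t)) ` (bitstrs n \<times> UNIV)"
          obtain c' a' i' s' b' where k: "k = (c', a', i', s', b')" by (cases k) auto
          have "length s' = n" "length i' = m" using kQ k by auto
          hence "\<not> (c' = 5 \<and> a' = a \<and> i' = i)" using kn k by (auto simp: image_iff)
          hence "OK k x = 0" unfolding k x 5 OK_op5 by auto
          thus "cnj (OK k x) * OK k y = 0" by simp
        qed simp
        also have "\<dots> = (\<Sum>t\<in>bitstrs n \<times> UNIV. cnj (V5 S t (s, b)) * V5 S t (s2, b2))"
          using True x y c2 5 by (intro sum.cong refl, clarify) (simp add: OK_op5)
        also have "\<dots> = (if (s, b) = (s2, b2) then 1 else 0)"
          using V5_unitary[of "bitstrs n" S] SX xb yb unfolding unitary_on_def by simp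
        finally show ?thesis using True x y c2 by auto
      qed
    next
      case 6
      show ?thesis
      proof (cases "a2 = a \<and> s2 = s")
        case False
        show ?thesis
        proof (rule zero_col)
          fix k show "OK k x = 0 \<or> OK k y = 0" using False x y c2 6 by (cases k) (auto simp: OK_op6)
        next
          show "x \<noteq> y" using False x y by auto
        qed
      next
        case True
        have "(\<Sum>k\<in>?Q. cnj (OK k x) * OK k y) =
              (\<Sum>t\<in>bitstrs m \<times> UNIV. cnj (OK (6, a, fst t, s, snd t) x) * OK (6, a, fst t, s, snd t) y)"
        proof (rule sum_focus[where g = "\<lambda>t. (6, a, fst t, s, snd t)"])
          show "inj_on (\<lambda>t. (6, a, fst t, s, snd t)) (bitstrs m \<times> UNIV)" by (auto simp: inj_on_def)
          show "(\<lambda>t. (6, a, fst t, s, snd t)) ` (bitstrs m \<times> UNIV) \<subseteq> ?Q" using xb by auto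
          fix k assume kQ: "k \<in> ?Q" and kn: "k \<notin> (\<lambda>t. (6, a, fst t, s, snd t)) ` (bitstrs m \<times> UNIV)"
          obtain c' a' i' s' b' where k: "k = (c', a', i', s', b')" by (cases k) auto
          have "length s' = n" "length i' = m" using kQ k by auto
          hence "\<not> (c' = 6 \<and> a' = a \<and> s' = s)" using kn k by (auto simp: image_iff)
          hence "OK k x = 0" unfolding k x 6 OK_op6 by auto
          thus "cnj (OK k x) * OK k y = 0" by simp
        qed simp
        also have "\<dots> = (\<Sum>t\<in>bitstrs m \<times> UNIV. cnj (V5 Ind t (i, b)) * V5 Ind t (i2, b2))"
          using True x y c2 6 by (intro sum.cong refl, clarify) (simp add: OK_op6)
        also have "\<dots> = (if (i, b) = (i2, b2) then 1 else 0)"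
          using V5_unitary[of "bitstrs m" Ind] IX xb yb unfolding unitary_on_def by simp
        finally show ?thesis using True x y c2 by auto
      qed
    qed
  qed
qed

end

lemma full_basis_mem[simp]: "(q, j) \<in> full_basis n m w \<longleftrightarrow> q \<in> qbasis n m \<and> j < w"
  by (simp add: full_basis_def)

lemma finite_full_basis[simp]: "finite (full_basis n m w)"
  by (simp add: full_basis_def)

lemma full_oracle_unitary:
  assumes U: "unitary_on (qbasis n m) (oracle_kernel n m S Ind M)"
  shows "unitary_on (full_basis n m w) (full_oracle n m S Ind M)"
  unfolding unitary_on_def
proof (intro ballI)
  fix x y assume xB: "x \<in> full_basis n m w" and yB: "y \<in> full_basis n m w"
  obtain q j where x: "x = (q, j)" by (cases x)
  obtain q2 j2 where y: "y = (q2, j2)" by (cases y)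
  let ?F = "full_oracle n m S Ind M"
  show "(\<Sum>k\<in>full_basis n m w. cnj (?F k x) * ?F k y) = (if x = y then 1 else 0)"
  proof (cases "j2 = j")
    case False
    then show ?thesis using x y by (auto simp: full_oracle_def intro!: sum.neutral)
  next
    case True
    have "(\<Sum>k\<in>full_basis n m w. cnj (?F k x) * ?F k y) =
          (\<Sum>q'\<in>qbasis n m. cnj (?F (q', j) x) * ?F (q', j) y)"
    proof (rule sum_focus[where g = "\<lambda>q'. (q', j)"])
      show "inj_on (\<lambda>q'. (q', j)) (qbasis n m)" by (auto simp: inj_on_def)
      show "(\<lambda>q'. (q', j)) ` qbasis n m \<subseteq> full_basis n m w" using xB x by auto
      fix k assume "k \<in> full_basis n m w" "k \<notin> (\<lambda>q'. (q', j)) ` qbasis n m"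
      then show "cnj (?F k x) * ?F k y = 0" using x by (cases k) (auto simp: full_oracle_def image_iff)
    qed simp
    also have "\<dots> = (\<Sum>q'\<in>qbasis n m. cnj (oracle_kernel n m S Ind M q' q) * oracle_kernel n m S Ind M q' q2)"
      using x y True by (simp add: full_oracle_def)
    also have "\<dots> = (if q = q2 then 1 else 0)" using U xB yB x y unfolding unitary_on_def by (auto simp: full_basis_def)
    finally show ?thesis using x y True by auto
  qed
qed

lemma sum_single:
  assumes "finite B" "pt \<in> B" "\<And>y. y \<in> B \<Longrightarrow> y \<noteq> pt \<Longrightarrow> F y = 0"
  shows "sum F B = F pt"
proof -
  have "sum F B = (\<Sum>c\<in>{()}. F pt)"
    by (rule sum_focus[where g = "\<lambda>_. pt"]) (use assms in auto)
  then show ?thesis by simp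
qed

definition Rset :: "nat \<Rightarrow> nat \<Rightarrow> (nat \<times> nat \<times> bitstr \<times> bool \<times> nat) set" where
  "Rset m w = {..<8} \<times> {..<3} \<times> bitstrs m \<times> UNIV \<times> {..<w}"

definition emb :: "(nat \<times> nat \<times> bitstr \<times> bool \<times> nat) \<Rightarrow> bitstr \<Rightarrow> qreg \<times> nat" where
  "emb r s = (case r of (c, a, i, b, j) \<Rightarrow> ((c, a, i, s, b), j))"

lemma finite_Rset[simp]: "finite (Rset m w)" by (simp add: Rset_def)

lemma sum_emb:
  "(\<Sum>x\<in>full_basis n m w. F x) = (\<Sum>r\<in>Rset m w. \<Sum>s\<in>bitstrs n. F (emb r s))"
proof -
  have bij: "bij_betw (\<lambda>(r, s). emb r s) (Rset m w \<times> bitstrs n) (full_basis n m w)"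
  proof (rule bij_betwI[where g = "\<lambda>((c, a, i, s, b), j). ((c, a, i, b, j), s)"])
    show "(\<lambda>(r, s). emb r s) \<in> Rset m w \<times> bitstrs n \<rightarrow> full_basis n m w"
      by (auto simp: Rset_def emb_def full_basis_def qbasis_def)
    show "(\<lambda>((c, a, i, s, b), j). ((c, a, i, b, j), s)) \<in> full_basis n m w \<rightarrow> Rset m w \<times> bitstrs n"
      by (auto simp: Rset_def emb_def full_basis_def qbasis_def)
  qed (auto simp: emb_def)
  have "(\<Sum>x\<in>full_basis n m w. F x) = (\<Sum>p\<in>Rset m w \<times> bitstrs n. F ((\<lambda>(r, s). emb r s) p))"
    using sum.reindex_bij_betw[OF bij, of F] by simp
  also have "\<dots> = (\<Sum>r\<in>Rset m w. \<Sum>s\<in>bitstrs n. F (emb r s))"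
    by (simp add: sum.cartesian_product split_def)
  finally show ?thesis .
qed

lemma emb_simp[simp]: "emb (c, a, i, b, j) s = ((c, a, i, s, b), j)" by (simp add: emb_def)

context
  fixes n m w :: nat and S Ind :: "bitstr set" and M :: "bitstr \<Rightarrow> bitstr \<Rightarrow> bitstr"
begin

abbreviation "FB \<equiv> full_basis n m w"
abbreviation "FO \<equiv> full_oracle n m S Ind M"

lemma OKr1: "oracle_kernel n m S Ind M (1, a, i, s', b) q = (if q = (1, a, i, s', b \<noteq> (s' \<in> S)) then 1 else 0)"
proof -
  obtain c a2 i2 s b2 where q: "q = (c, a2, i2, s, b2)" by (cases q) auto
  show ?thesis unfolding q
    by (cases b; cases b2; cases "s' \<in> S"; cases "c = 1"; cases "s = s'") (simp_all add: oracle_kernel_def delta_def)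
qed

lemma OKr3: "oracle_kernel n m S Ind M (3, a, i, s', b) (c, a2, i2, s, b2) =
   (if c = 3 \<and> a2 = a \<and> i2 = i \<and> b2 = b then prep_kernel (bitstrs n) (replicate n False) S s' s else 0)"
  by (auto simp: oracle_kernel_def delta_def)

lemma OKr5: "oracle_kernel n m S Ind M (5, a, i, s', b) (c, a2, i2, s, b2) =
   (if c = 5 \<and> a2 = a \<and> i2 = i then
      (if b2 = (\<not> b) then proj_kernel S s' s else delta s' s - proj_kernel S s' s) else 0)"
  by (auto simp: oracle_kernel_def delta_def)

lemma AP1:
  assumes "((1, a, i, s', b), j) \<in> FB"
  shows "apply_op FB FO \<phi> ((1, a, i, s', b), j) = \<phi> ((1, a, i, s', b \<noteq> (s' \<in> S)), j)"
proof -
  have k: "FO ((1, a, i, s', b), j) y = (if y = ((1, a, i, s', b \<noteq> (s' \<in> S)), j) then 1 else 0)" for y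
    unfolding full_oracle_def by (cases y) (simp only: fst_conv snd_conv OKr1, auto)
  show ?thesis unfolding apply_op_def k using assms by (simp add: if_distrib[of "\<lambda>v. v * _"] cong: if_cong)
qed

lemma AP3:
  assumes "((3, a, i, s', b), j) \<in> FB"
  shows "apply_op FB FO \<phi> ((3, a, i, s', b), j) =
     (\<Sum>s\<in>bitstrs n. prep_kernel (bitstrs n) (replicate n False) S s' s * \<phi> ((3, a, i, s, b), j))"
proof -
  have "apply_op FB FO \<phi> ((3, a, i, s', b), j) =
     (\<Sum>s\<in>bitstrs n. FO ((3, a, i, s', b), j) ((3, a, i, s, b), j) * \<phi> ((3, a, i, s, b), j))"
    unfolding apply_op_def
  proof (rule sum_focus[where g = "\<lambda>s. ((3::nat, a, i, s, b), j)"])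
    show "inj_on (\<lambda>s. ((3::nat, a, i, s, b), j)) (bitstrs n)" by (auto simp: inj_on_def)
    show "(\<lambda>s. ((3::nat, a, i, s, b), j)) ` bitstrs n \<subseteq> FB" using assms by auto
    fix k assume "k \<in> FB" "k \<notin> (\<lambda>s. ((3::nat, a, i, s, b), j)) ` bitstrs n"
    then show "FO ((3, a, i, s', b), j) k * \<phi> k = 0"
      by (cases k) (auto simp: full_oracle_def OKr3 image_iff)
  qed simp
  also have "\<dots> = (\<Sum>s\<in>bitstrs n. prep_kernel (bitstrs n) (replicate n False) S s' s * \<phi> ((3, a, i, s, b), j))"
    by (simp add: full_oracle_def OKr3)
  finally show ?thesis .
qed

lemma AP5:
  assumes "((5, a, i, s', b), j) \<in> FB"
  shows "apply_op FB FO \<phi> ((5, a, i, s', b), j) =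
     (\<Sum>s\<in>bitstrs n. proj_kernel S s' s * \<phi> ((5, a, i, s, \<not> b), j)
        + (delta s' s - proj_kernel S s' s) * \<phi> ((5, a, i, s, b), j))"
proof -
  have "apply_op FB FO \<phi> ((5, a, i, s', b), j) =
     (\<Sum>t\<in>bitstrs n \<times> UNIV. FO ((5, a, i, s', b), j) ((5, a, i, fst t, snd t), j) * \<phi> ((5, a, i, fst t, snd t), j))"
    unfolding apply_op_def
  proof (rule sum_focus[where g = "\<lambda>t. ((5::nat, a, i, fst t, snd t), j)"])
    show "inj_on (\<lambda>t. ((5, a, i, fst t, snd t), j)) (bitstrs n \<times> UNIV)" by (auto simp: inj_on_def)
    show "(\<lambda>t. ((5, a, i, fst t, snd t), j)) ` (bitstrs n \<times> UNIV) \<subseteq> FB" using assms by auto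
    fix k assume "k \<in> FB" "k \<notin> (\<lambda>t. ((5, a, i, fst t, snd t), j)) ` (bitstrs n \<times> UNIV)"
    then show "FO ((5, a, i, s', b), j) k * \<phi> k = 0"
      by (cases k) (auto simp: full_oracle_def OKr5 image_iff)
  qed simp
  also have "\<dots> = (\<Sum>s\<in>bitstrs n. proj_kernel S s' s * \<phi> ((5, a, i, s, \<not> b), j)
        + (delta s' s - proj_kernel S s' s) * \<phi> ((5, a, i, s, b), j))"
    unfolding sum_X_bool by (intro sum.cong refl) (cases b, auto simp: full_oracle_def OKr5 algebra_simps)
  finally show ?thesis .
qed

end

definition S0 :: "nat \<Rightarrow> bitstr set" where
  "S0 n = {s. length s = n \<and> s \<noteq> [] \<and> hd s}"

definition xorl :: "bool list \<Rightarrow> bool list \<Rightarrow> bool list" where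
  "xorl t i = map2 (\<lambda>p q. p \<noteq> q) t i"

definition Mx :: "bitstr \<Rightarrow> bitstr \<Rightarrow> bitstr" where
  "Mx i s = (if s \<noteq> [] \<and> hd s then True # xorl (tl s) i else s)"

definition Zs :: "nat \<Rightarrow> bitstr set" where
  "Zs n = {s. length s = n \<and> s \<noteq> [] \<and> \<not> hd s \<and> tl s \<noteq> replicate (n - 1) False}"

lemma S0_image: "n \<ge> 1 \<Longrightarrow> S0 n = Cons True ` bitstrs (n - 1)"
  unfolding S0_def by (auto simp: image_iff neq_Nil_conv)

lemma card_S0: "n \<ge> 1 \<Longrightarrow> card (S0 n) = 2 ^ (n - 1)"
  by (simp add: S0_image card_image card_bitstrs)

lemma finite_S0[simp]: "finite (S0 n)"
  by (rule finite_subset[of _ "bitstrs n"]) (auto simp: S0_def)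

lemma S0_sub: "S0 n \<subseteq> bitstrs n" by (auto simp: S0_def)

lemma S0_ne: "n \<ge> 1 \<Longrightarrow> S0 n \<noteq> {}"
  using card_S0[of n] by auto

lemma Zs_image: "n \<ge> 1 \<Longrightarrow> Zs n = Cons False ` (bitstrs (n - 1) - {replicate (n - 1) False})"
  unfolding Zs_def by (auto simp: image_iff neq_Nil_conv)

lemma card_Zs: "n \<ge> 1 \<Longrightarrow> card (Zs n) = 2 ^ (n - 1) - 1"
  by (simp add: Zs_image card_image card_bitstrs card_Diff_singleton)

lemma finite_Zs[simp]: "finite (Zs n)"
  by (rule finite_subset[of _ "bitstrs n"]) (auto simp: Zs_def)

lemma map2_inv: "length t \<le> length i \<Longrightarrow> xorl (xorl t i) i = t"
  unfolding xorl_def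
proof (induction t arbitrary: i)
  case Nil then show ?case by simp
next
  case (Cons x t) then show ?case by (cases i) auto
qed

lemma xorl_len[simp]: "length (xorl t i) = min (length t) (length i)"
  by (simp add: xorl_def)


lemma Mx_S0: "s \<in> S0 n \<Longrightarrow> length i \<ge> n - 1 \<Longrightarrow> Mx i s \<in> S0 n"
  by (auto simp: S0_def Mx_def)

lemma Mx_inv: "s \<in> S0 n \<Longrightarrow> length i \<ge> n - 1 \<Longrightarrow> Mx i (Mx i s) = s"
  by (cases s) (auto simp: S0_def Mx_def map2_inv)

lemma Mx_Zs: "z \<in> Zs n \<Longrightarrow> Mx i z = z"
  by (auto simp: Zs_def Mx_def)

lemma Zs_S0: "z \<in> Zs n \<Longrightarrow> z \<notin> S0 n"
  by (auto simp: Zs_def S0_def)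

lemma Zs_len: "z \<in> Zs n \<Longrightarrow> length z = n"
  by (auto simp: Zs_def)

lemma z0_S0: "replicate n False \<notin> S0 n"
  by (cases n) (auto simp: S0_def)

lemma z0_Zs: "replicate n False \<notin> Zs n"
  by (cases n) (auto simp: Zs_def)

lemma map2_take_iff:
  "length t = k \<Longrightarrow> length t' = k \<Longrightarrow> k \<le> length i \<Longrightarrow>
   (xorl t i = t') \<longleftrightarrow> (take k i = xorl t t')"
  unfolding xorl_def
proof (induction t arbitrary: i t' k)
  case Nil then show ?case by simp
next
  case (Cons x t)
  then obtain y i' where i: "i = y # i'" by (cases i) auto
  obtain x' t'' where t': "t' = x' # t''" using Cons.prems by (cases t') auto
  have k: "k = Suc (length t)" using Cons.prems by simp
  have "map2 (\<lambda>p q. p \<noteq> q) t i' = t'' \<longleftrightarrow> take (length t) i' = map2 (\<lambda>p q. p \<noteq> q) t t''"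
    using Cons.prems t' i k by (intro Cons.IH) auto
  then show ?case using i t' k by auto
qed

lemma card_take_eq:
  assumes "length c = k" "k \<le> m"
  shows "card {i \<in> bitstrs m. take k i = c} = 2 ^ (m - k)"
proof -
  have "{i \<in> bitstrs m. take k i = c} = (\<lambda>r. c @ r) ` bitstrs (m - k)"
  proof (intro set_eqI iffI)
    fix i assume "i \<in> {i \<in> bitstrs m. take k i = c}"
    then have "i = c @ drop k i" "length (drop k i) = m - k" using assms by (auto, metis append_take_drop_id)
    then show "i \<in> (\<lambda>r. c @ r) ` bitstrs (m - k)" by auto
  next
    fix i assume "i \<in> (\<lambda>r. c @ r) ` bitstrs (m - k)"
    then show "i \<in> {i \<in> bitstrs m. take k i = c}" using assms by auto
  qed
  then show ?thesis by (simp add: card_image card_bitstrs inj_on_def)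
qed

lemma card_Mx_eq:
  assumes x: "x \<in> S0 n" and y: "y \<in> S0 n" and mn: "n - 1 \<le> m"
  shows "card {i \<in> bitstrs m. Mx i x = y} = 2 ^ (m - (n - 1))"
proof -
  obtain t where xt: "x = True # t" and lt: "length t = n - 1" using x by (cases x) (auto simp: S0_def)
  obtain t' where yt: "y = True # t'" and lt': "length t' = n - 1" using y by (cases y) (auto simp: S0_def)
  have "{i \<in> bitstrs m. Mx i x = y} = {i \<in> bitstrs m. take (n - 1) i = xorl t t'}"
    using map2_take_iff[OF lt lt'] mn by (auto simp: xt yt Mx_def)
  then show ?thesis using card_take_eq[of "xorl t t'" "n - 1" m] lt lt' mn by simp
qed

lemma inv_inj: "(\<And>s. s \<in> S \<Longrightarrow> f (f s) = s) \<Longrightarrow> inj_on f S"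
  by (metis inj_onI)

lemma Mx_inv_S:
  assumes "S = S0 n \<or> (\<exists>z\<in>Zs n. S = insert z (S0 n))" "length i \<ge> n - 1" "s \<in> S"
  shows "Mx i (Mx i s) = s" "Mx i s \<in> S"
  using assms Mx_inv[of s n i] Mx_S0[of s n i] Mx_Zs by auto

lemma mix_pow_eq:
  assumes S: "S = S0 n \<or> (\<exists>z\<in>Zs n. S = insert z (S0 n))" and mn: "n \<le> m"
  shows "mix_pow S (bitstrs m) Mx a i s = (if length i = m \<and> a \<noteq> 1 \<and> s \<in> S0 n then Mx i s else s)"
proof (cases "length i = m \<and> s \<in> S")
  case False
  have "s \<notin> S0 n \<or> length i \<noteq> m" using False S by auto
  then show ?thesis using False by (auto simp: mix_pow_def)
next
  case True
  have li: "length i \<ge> n - 1" using True mn by simp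
  have inj: "inj_on (Mx i) S" by (rule inv_inj) (use Mx_inv_S[OF S li] in auto)
  have ti: "the_inv_into S (Mx i) s = Mx i s"
    by (rule the_inv_into_f_eq[OF inj]) (use Mx_inv_S[OF S li] True in auto)
  have z: "s \<notin> S0 n \<Longrightarrow> Mx i s = s" using True S Mx_Zs by auto
  show ?thesis using True ti z by (auto simp: mix_pow_def)
qed

lemma mixer_tv_S0:
  assumes x: "x \<in> S0 n" and n: "n \<ge> 1" and mn: "n \<le> m"
  shows "mixer_tv (bitstrs m) Mx (S0 n) x = 0"
proof -
  have "\<And>y. y \<in> S0 n \<Longrightarrow> real (card {i \<in> bitstrs m. Mx i x = y}) / real (card (bitstrs m)) - 1 / real (card (S0 n)) = 0"
  proof -
    fix y assume y: "y \<in> S0 n"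
    have "real (card {i \<in> bitstrs m. Mx i x = y}) = 2 ^ (m - (n - 1))"
      using card_Mx_eq[OF x y] mn by simp
    moreover have "(2::real) ^ (m - (n - 1)) = 2 ^ m / 2 ^ (n - 1)"
      using mn by (simp add: power_diff)
    ultimately show "real (card {i \<in> bitstrs m. Mx i x = y}) / real (card (bitstrs m)) - 1 / real (card (S0 n)) = 0"
      using n by (simp add: card_bitstrs card_S0)
  qed
  then show ?thesis unfolding mixer_tv_def by simp
qed

lemma mixer_tv_Z:
  assumes z: "z \<in> Zs n"
  shows "mixer_tv (bitstrs m) Mx {z} z = 0"
proof -
  have "{i \<in> bitstrs m. Mx i z = z} = bitstrs m" using Mx_Zs[OF z] by auto
  then show ?thesis unfolding mixer_tv_def by (simp add: card_bitstrs)
qed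

lemma cm_no:
  assumes n: "n \<ge> 1" and mn: "n \<le> m"
  shows "component_mixer n m (S0 n) {S0 n} (bitstrs m) Mx"
proof -
  have 1: "partition_on (S0 n) {S0 n}" using S0_ne n by (auto simp: partition_on_def)
  have 2: "bitstrs m \<noteq> {}" using replicate_bitstrs by blast
  have 3: "inj_on (Mx i) (S0 n) \<and> (\<forall>C\<in>{S0 n}. \<forall>x\<in>C. Mx i x \<in> C)" if i: "i \<in> bitstrs m" for i
  proof -
    have li: "length i \<ge> n - 1" using i mn by simp
    have "inj_on (Mx i) (S0 n)" by (rule inv_inj) (use Mx_inv li in auto)
    then show ?thesis using Mx_S0 li by auto
  qed
  have 4: "mixer_tv (bitstrs m) Mx C x \<le> 2 powr (- real n - 2)" if "C \<in> {S0 n}" "x \<in> C" for C x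
    using mixer_tv_S0[of x n m] n mn that by simp
  show ?thesis unfolding component_mixer_def
  proof (intro conjI)
    show "\<forall>i\<in>bitstrs m. inj_on (Mx i) (S0 n) \<and> (\<forall>C\<in>{S0 n}. \<forall>x\<in>C. Mx i x \<in> C)" using 3 by blast
    show "\<forall>C\<in>{S0 n}. \<forall>x\<in>C. mixer_tv (bitstrs m) Mx C x \<le> 2 powr (- real n - 2)" using 4 by blast
  qed (use 1 2 S0_sub S0_ne n in auto)
qed

lemma cm_yes:
  assumes n: "n \<ge> 1" and mn: "n \<le> m" and z: "z \<in> Zs n"
  shows "component_mixer n m (insert z (S0 n)) {S0 n, {z}} (bitstrs m) Mx"
proof -
  have 0: "insert z (S0 n) \<subseteq> bitstrs n" using S0_sub Zs_len[OF z] by auto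
  have 1: "partition_on (insert z (S0 n)) {S0 n, {z}}"
    using S0_ne n Zs_S0[OF z] by (auto simp: partition_on_def pairwise_def disjnt_def)
  have 2: "bitstrs m \<noteq> {}" using replicate_bitstrs by blast
  have 3: "inj_on (Mx i) (insert z (S0 n)) \<and> (\<forall>C\<in>{S0 n, {z}}. \<forall>x\<in>C. Mx i x \<in> C)" if i: "i \<in> bitstrs m" for i
  proof -
    have li: "length i \<ge> n - 1" using i mn by simp
    have "inj_on (Mx i) (insert z (S0 n))" by (rule inv_inj) (use Mx_inv li Mx_Zs[OF z] in auto)
    then show ?thesis using Mx_S0 li Mx_Zs[OF z] by auto
  qed
  have 4: "mixer_tv (bitstrs m) Mx C x \<le> 2 powr (- real n - 2)" if "C \<in> {S0 n, {z}}" "x \<in> C" for C x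
    using mixer_tv_S0[of x n m] mixer_tv_Z[OF z, of m] n mn that by auto
  show ?thesis unfolding component_mixer_def
  proof (intro conjI)
    show "\<forall>i\<in>bitstrs m. inj_on (Mx i) (insert z (S0 n)) \<and> (\<forall>C\<in>{S0 n, {z}}. \<forall>x\<in>C. Mx i x \<in> C)" using 3 by blast
    show "\<forall>C\<in>{S0 n, {z}}. \<forall>x\<in>C. mixer_tv (bitstrs m) Mx C x \<le> 2 powr (- real n - 2)" using 4 by blast
  qed (use 0 1 2 in auto)
qed

lemma card_P_yes: "n \<ge> 1 \<Longrightarrow> z \<in> Zs n \<Longrightarrow> card {S0 n, {z}} = 2"
  using Zs_S0[of z n] S0_ne[of n] by (subst card_insert_disjoint) auto

lemma L2_abs: "L2_set (\<lambda>s. \<bar>f s\<bar>) X = L2_set f X"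
  unfolding L2_set_def by simp

lemma nrm_scale: "nrm X (\<lambda>s. complex_of_real (f s) * c) = L2_set f X * cmod c"
proof -
  have "nrm X (\<lambda>s. complex_of_real (f s) * c) = L2_set (\<lambda>s. \<bar>f s\<bar> * cmod c) X"
    unfolding nrm_def by (simp add: norm_mult)
  also have "\<dots> = L2_set (\<lambda>s. \<bar>f s\<bar>) X * cmod c" by (simp add: L2_set_left_distrib)
  finally show ?thesis by (simp add: L2_abs)
qed

lemma cs_complex: "cmod (\<Sum>s\<in>X. complex_of_real (f s) * \<psi> s) \<le> L2_set f X * nrm X \<psi>"
proof -
  have "cmod (\<Sum>s\<in>X. complex_of_real (f s) * \<psi> s) \<le> (\<Sum>s\<in>X. \<bar>f s\<bar> * \<bar>cmod (\<psi> s)\<bar>)"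
    by (rule order_trans[OF norm_sum]) (simp add: norm_mult)
  also have "\<dots> \<le> L2_set f X * L2_set (\<lambda>s. cmod (\<psi> s)) X" by (rule L2_set_mult_ineq)
  finally show ?thesis by (simp add: nrm_def)
qed

lemma rank1_bound:
  fixes v w :: "'a \<Rightarrow> real"
  shows "nrm X (\<lambda>s'. \<Sum>s\<in>X. complex_of_real (v s' * v s - w s' * w s) * \<psi> s)
     \<le> L2_set (\<lambda>s. v s - w s) X * (L2_set v X + L2_set w X) * nrm X \<psi>"
proof -
  define \<alpha> where "\<alpha> = (\<Sum>s\<in>X. complex_of_real (v s) * \<psi> s)"
  define \<beta> where "\<beta> = (\<Sum>s\<in>X. complex_of_real (v s - w s) * \<psi> s)"
  have pw: "(\<Sum>s\<in>X. complex_of_real (v s' * v s - w s' * w s) * \<psi> s)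
      = complex_of_real (v s' - w s') * \<alpha> + complex_of_real (w s') * \<beta>" for s'
    unfolding \<alpha>_def \<beta>_def
    by (simp add: sum_distrib_left sum.distrib[symmetric] sum_subtractf[symmetric] algebra_simps)
  have "nrm X (\<lambda>s'. \<Sum>s\<in>X. complex_of_real (v s' * v s - w s' * w s) * \<psi> s)
      = nrm X (\<lambda>s'. complex_of_real (v s' - w s') * \<alpha> + complex_of_real (w s') * \<beta>)"
    by (simp only: pw)
  also have "\<dots> \<le> L2_set (\<lambda>s. v s - w s) X * cmod \<alpha> + L2_set w X * cmod \<beta>"
    using nrm_add[of X "\<lambda>s'. complex_of_real (v s' - w s') * \<alpha>" "\<lambda>s'. complex_of_real (w s') * \<beta>"]
    by (simp only: nrm_scale)
  also have "\<dots> \<le> L2_set (\<lambda>s. v s - w s) X * (L2_set v X * nrm X \<psi>) + L2_set w X * (L2_set (\<lambda>s. v s - w s) X * nrm X \<psi>)"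
    unfolding \<alpha>_def \<beta>_def
    by (intro add_mono mult_left_mono cs_complex L2_set_nonneg)
  also have "\<dots> = L2_set (\<lambda>s. v s - w s) X * (L2_set v X + L2_set w X) * nrm X \<psi>"
    by (simp add: algebra_simps)
  finally show ?thesis .
qed

lemma sq_le_of_le: "0 \<le> a \<Longrightarrow> a \<le> b \<Longrightarrow> a^2 \<le> (b::real)^2"
  by (simp add: power_mono)

lemma block_bound:
  fixes D \<phi> :: "qreg \<times> nat \<Rightarrow> complex"
  assumes L: "L \<ge> 0"
    and sig: "bij_betw \<sigma> (Rset m w) (Rset m w)"
    and blk: "\<And>r. r \<in> Rset m w \<Longrightarrow> (\<Sum>s\<in>bitstrs n. (cmod (D (emb r s)))^2)
        \<le> L^2 * ((\<Sum>s\<in>bitstrs n. (cmod (\<phi> (emb r s)))^2) + (\<Sum>s\<in>bitstrs n. (cmod (\<phi> (emb (\<sigma> r) s)))^2))"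
  shows "nrm (full_basis n m w) D \<le> sqrt 2 * L * nrm (full_basis n m w) \<phi>"
proof -
  let ?B = "full_basis n m w" and ?R = "Rset m w" and ?X = "bitstrs n"
  let ?f = "\<lambda>r. (\<Sum>s\<in>?X. (cmod (\<phi> (emb r s)))^2)"
  have "(nrm ?B D)^2 = (\<Sum>r\<in>?R. \<Sum>s\<in>?X. (cmod (D (emb r s)))^2)"
    by (simp add: nrm_sq sum_emb)
  also have "\<dots> \<le> (\<Sum>r\<in>?R. L^2 * (?f r + ?f (\<sigma> r)))"
    by (rule sum_mono) (rule blk)
  also have "\<dots> = L^2 * ((\<Sum>r\<in>?R. ?f r) + (\<Sum>r\<in>?R. ?f (\<sigma> r)))"
    by (simp only: sum.distrib[symmetric] sum_distrib_left)
  also have "(\<Sum>r\<in>?R. ?f (\<sigma> r)) = (\<Sum>r\<in>?R. ?f r)"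
    using sum.reindex_bij_betw[OF sig, of ?f] by simp
  also have "(\<Sum>r\<in>?R. ?f r) = (nrm ?B \<phi>)^2"
    by (simp add: nrm_sq sum_emb)
  finally have 1: "(nrm ?B D)^2 \<le> L^2 * ((nrm ?B \<phi>)^2 + (nrm ?B \<phi>)^2)" .
  have 2: "L^2 * ((nrm ?B \<phi>)^2 + (nrm ?B \<phi>)^2) = (sqrt 2 * L * nrm ?B \<phi>)^2"
    by (simp add: power_mult_distrib)
  have 3: "0 \<le> sqrt 2 * L * nrm ?B \<phi>" using L by simp
  show ?thesis using power2_le_imp_le[OF 1[unfolded 2] 3] .
qed

lemma run_diff_step:
  assumes U: "unitary_on (full_basis n m w) (U (Suc t))"
    and O1: "unitary_on (full_basis n m w) (full_oracle n m Sy I M)"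
  shows "nrm (full_basis n m w) (\<lambda>x. run_state n m w U Sy I M (Suc t) x - run_state n m w U Sn I M (Suc t) x)
     \<le> nrm (full_basis n m w) (\<lambda>x. run_state n m w U Sy I M t x - run_state n m w U Sn I M t x)
      + nrm (full_basis n m w) (\<lambda>x. apply_op (full_basis n m w) (full_oracle n m Sy I M) (run_state n m w U Sn I M t) x
           - apply_op (full_basis n m w) (full_oracle n m Sn I M) (run_state n m w U Sn I M t) x)"
proof -
  let ?B = "full_basis n m w"
  let ?p1 = "run_state n m w U Sy I M t" and ?p0 = "run_state n m w U Sn I M t"
  let ?A1 = "apply_op ?B (full_oracle n m Sy I M)" and ?A0 = "apply_op ?B (full_oracle n m Sn I M)"
  have "nrm ?B (\<lambda>x. run_state n m w U Sy I M (Suc t) x - run_state n m w U Sn I M (Suc t) x)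
      = nrm ?B (apply_op ?B (U (Suc t)) (\<lambda>y. ?A1 ?p1 y - ?A0 ?p0 y))"
    by (rule nrm_cong) (simp add: apply_op_diff)
  also have "\<dots> = nrm ?B (\<lambda>y. ?A1 ?p1 y - ?A0 ?p0 y)"
    by (rule unitary_nrm[OF finite_full_basis U])
  also have "\<dots> = nrm ?B (\<lambda>y. ?A1 (\<lambda>x. ?p1 x - ?p0 x) y + (?A1 ?p0 y - ?A0 ?p0 y))"
    by (simp add: apply_op_diff)
  also have "\<dots> \<le> nrm ?B (?A1 (\<lambda>x. ?p1 x - ?p0 x)) + nrm ?B (\<lambda>y. ?A1 ?p0 y - ?A0 ?p0 y)"
    by (rule nrm_add)
  also have "nrm ?B (?A1 (\<lambda>x. ?p1 x - ?p0 x)) = nrm ?B (\<lambda>x. ?p1 x - ?p0 x)"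
    by (rule unitary_nrm[OF finite_full_basis O1])
  finally show ?thesis .
qed

lemma hybrid:
  assumes UU: "\<And>k. k \<le> T \<Longrightarrow> unitary_on (full_basis n m w) (U k)"
    and O1: "unitary_on (full_basis n m w) (full_oracle n m Sy I M)"
  shows "t \<le> T \<Longrightarrow> nrm (full_basis n m w) (\<lambda>x. run_state n m w U Sy I M t x - run_state n m w U Sn I M t x)
     \<le> (\<Sum>k<t. nrm (full_basis n m w) (\<lambda>x. apply_op (full_basis n m w) (full_oracle n m Sy I M) (run_state n m w U Sn I M k) x
           - apply_op (full_basis n m w) (full_oracle n m Sn I M) (run_state n m w U Sn I M k) x))"
proof (induction t)
  case 0
  then show ?case by (simp add: nrm_def L2_set_def)
next
  case (Suc t)
  then show ?case using run_diff_step[where U=U and t=t and Sy=Sy and Sn=Sn and n=n and m=m and w=w and I=I and M=M, OF UU[OF Suc.prems] O1] by simp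
qed

lemma init_nrm:
  assumes "0 < w"
  shows "nrm (full_basis n m w) (init_state n m) = 1"
proof -
  let ?p = "((0::nat, 0::nat, replicate m False, replicate n False, False), 0::nat)"
  have "(\<Sum>x\<in>full_basis n m w. (cmod (init_state n m x))^2) = (cmod (init_state n m ?p))^2"
    by (rule sum_single) (use assms in \<open>auto simp: init_state_def\<close>)
  then have "(nrm (full_basis n m w) (init_state n m))^2 = 1"
    by (simp add: nrm_sq init_state_def)
  then show ?thesis using nrm_nonneg by (simp add: power2_eq_1_iff) (smt (verit) nrm_nonneg)
qed

lemma run_nrm:
  assumes w: "0 < w" and UU: "\<And>k. k \<le> T \<Longrightarrow> unitary_on (full_basis n m w) (U k)"
    and O: "unitary_on (full_basis n m w) (full_oracle n m S I M)"
  shows "t \<le> T \<Longrightarrow> nrm (full_basis n m w) (run_state n m w U S I M t) = 1"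
proof (induction t)
  case 0
  then show ?case using unitary_nrm[OF finite_full_basis UU[of 0]] init_nrm[OF w] by simp
next
  case (Suc t)
  then show ?case using unitary_nrm[OF finite_full_basis UU[OF Suc.prems]] unitary_nrm[OF finite_full_basis O] by simp
qed

lemma accept_gap:
  fixes a b :: "'x \<Rightarrow> complex"
  assumes fin: "finite B" and Acc: "Acc \<subseteq> B" and na: "nrm B a = 1" and nb: "nrm B b = 1"
    and gap: "(\<Sum>x\<in>Acc. (cmod (a x))^2) - (\<Sum>x\<in>Acc. (cmod (b x))^2) \<ge> 1/3"
  shows "nrm B (\<lambda>x. a x - b x) \<ge> 1/6"
proof -
  have "1/3 \<le> (\<Sum>x\<in>Acc. (cmod (a x))^2 - (cmod (b x))^2)" using gap by (simp add: sum_subtractf)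
  also have "\<dots> \<le> (\<Sum>x\<in>Acc. cmod (a x - b x) * (cmod (a x) + cmod (b x)))"
  proof (rule sum_mono)
    fix x
    have "(cmod (a x))^2 - (cmod (b x))^2 = (cmod (a x) - cmod (b x)) * (cmod (a x) + cmod (b x))"
      by (simp add: power2_eq_square algebra_simps)
    also have "\<dots> \<le> cmod (a x - b x) * (cmod (a x) + cmod (b x))"
      by (intro mult_right_mono) (auto simp: norm_triangle_ineq2)
    finally show "(cmod (a x))^2 - (cmod (b x))^2 \<le> cmod (a x - b x) * (cmod (a x) + cmod (b x))" .
  qed
  also have "\<dots> \<le> (\<Sum>x\<in>B. cmod (a x - b x) * (cmod (a x) + cmod (b x)))"
    by (rule sum_mono2[OF fin Acc]) auto
  also have "\<dots> \<le> L2_set (\<lambda>x. cmod (a x - b x)) B * L2_set (\<lambda>x. cmod (a x) + cmod (b x)) B"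
    using L2_set_mult_ineq[of "\<lambda>x. cmod (a x - b x)" "\<lambda>x. cmod (a x) + cmod (b x)" B] by simp
  also have "\<dots> \<le> nrm B (\<lambda>x. a x - b x) * (nrm B a + nrm B b)"
    unfolding nrm_def by (intro mult_left_mono L2_set_triangle_ineq L2_set_nonneg)
  finally show ?thesis using na nb by simp
qed

definition flipr :: "nat \<times> nat \<times> bitstr \<times> bool \<times> nat \<Rightarrow> nat \<times> nat \<times> bitstr \<times> bool \<times> nat" where
  "flipr r = (case r of (c, a, i, b, j) \<Rightarrow> (c, a, i, \<not> b, j))"

lemma flipr_simp[simp]: "flipr (c, a, i, b, j) = (c, a, i, \<not> b, j)" by (simp add: flipr_def)

lemma flipr_bij: "bij_betw flipr (Rset m w) (Rset m w)"
  by (rule bij_betwI[where g = flipr]) (auto simp: Rset_def flipr_def split: prod.splits)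

lemma mix_ok:
  assumes S: "S = S0 n \<or> (\<exists>z\<in>Zs n. S = insert z (S0 n))" and mn: "n \<le> m"
    and a: "a < 3" and i: "i \<in> bitstrs m"
  shows "(\<forall>s\<in>bitstrs n. mix_pow S (bitstrs m) Mx a i s \<in> bitstrs n) \<and> inj_on (mix_pow S (bitstrs m) Mx a i) (bitstrs n)"
proof -
  have li: "length i \<ge> n - 1" using i mn by simp
  have e: "mix_pow S (bitstrs m) Mx a i s = (if length i = m \<and> a \<noteq> 1 \<and> s \<in> S0 n then Mx i s else s)" for s
    by (rule mix_pow_eq[OF S mn])
  have inv: "mix_pow S (bitstrs m) Mx a i (mix_pow S (bitstrs m) Mx a i s) = s" for s
    unfolding e using Mx_S0[OF _ li] Mx_inv[OF _ li] by auto
  have len: "s \<in> bitstrs n \<Longrightarrow> mix_pow S (bitstrs m) Mx a i s \<in> bitstrs n" for s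
  proof -
    assume "s \<in> bitstrs n"
    then show ?thesis unfolding e using Mx_S0[OF _ li, of s] S0_sub[of n] by auto
  qed
  show ?thesis using len inv_inj[of "bitstrs n" "mix_pow S (bitstrs m) Mx a i"] inv by auto
qed

lemma FO_unitary:
  assumes S: "S = S0 n \<or> (\<exists>z\<in>Zs n. S = insert z (S0 n))" and mn: "n \<le> m" and n: "n \<ge> 1"
  shows "unitary_on (full_basis n m w) (full_oracle n m S (bitstrs m) Mx)"
proof (rule full_oracle_unitary, rule OK_unitary)
  show "S \<subseteq> bitstrs n" using S S0_sub Zs_len by auto
  show "S \<noteq> {}" using S S0_ne[OF n] by auto
  show "bitstrs m \<subseteq> bitstrs m" by simp
  show "bitstrs m \<noteq> {}" using replicate_bitstrs by blast
  fix a :: nat and i assume "a < 3" "i \<in> bitstrs m"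
  then show "(\<forall>s\<in>bitstrs n. mix_pow S (bitstrs m) Mx a i s \<in> bitstrs n) \<and> inj_on (mix_pow S (bitstrs m) Mx a i) (bitstrs n)"
    by (rule mix_ok[OF S mn])
qed

definition dvec :: "nat \<Rightarrow> bitstr set \<Rightarrow> bitstr \<Rightarrow> real" where
  "dvec n S u = (if u = replicate n False then 1 else 0) - unif_amp S u"

lemma dvec_sq:
  assumes SX: "S \<subseteq> bitstrs n" and Sne: "S \<noteq> {}" and z0: "replicate n False \<notin> S"
  shows "(\<Sum>u\<in>bitstrs n. (dvec n S u)^2) = 2"
proof -
  have pw: "(dvec n S u)^2 = (if u = replicate n False then 1 else 0) + (unif_amp S u)^2" for u
    using z0 by (auto simp: dvec_def unif_amp_def power2_eq_square)
  show ?thesis unfolding pw sum.distrib using unif_sq_sum[OF finite_bitstrs SX Sne] by simp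
qed

lemma prep_simp:
  assumes SX: "S \<subseteq> bitstrs n" and Sne: "S \<noteq> {}" and z0: "replicate n False \<notin> S"
  shows "prep_kernel (bitstrs n) (replicate n False) S s' s = delta s' s - complex_of_real (dvec n S s' * dvec n S s)"
  using dvec_sq[OF assms] unfolding prep_kernel_def Let_def dvec_def[symmetric] by simp

lemma FO_eq_other:
  assumes mn: "n \<le> m" and z: "z \<in> Zs n" and c: "c \<noteq> 1" "c \<noteq> 3" "c \<noteq> 5"
  shows "full_oracle n m (insert z (S0 n)) (bitstrs m) Mx ((c, a, i, s', b), j) y
       = full_oracle n m (S0 n) (bitstrs m) Mx ((c, a, i, s', b), j) y"
proof -
  have e1: "mix_pow (insert z (S0 n)) (bitstrs m) Mx = mix_pow (S0 n) (bitstrs m) Mx"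
  proof (intro ext)
    fix a i s
    have "mix_pow (insert z (S0 n)) (bitstrs m) Mx a i s = (if length i = m \<and> a \<noteq> 1 \<and> s \<in> S0 n then Mx i s else s)"
      by (rule mix_pow_eq) (use z mn in auto)
    moreover have "mix_pow (S0 n) (bitstrs m) Mx a i s = (if length i = m \<and> a \<noteq> 1 \<and> s \<in> S0 n then Mx i s else s)"
      by (rule mix_pow_eq) (use z mn in auto)
    ultimately show "mix_pow (insert z (S0 n)) (bitstrs m) Mx a i s = mix_pow (S0 n) (bitstrs m) Mx a i s" by simp
  qed
  obtain c2 a2 i2 s2 b2 j2 where y: "y = ((c2, a2, i2, s2, b2), j2)" by (cases y) auto
  show ?thesis unfolding y full_oracle_def oracle_kernel_def e1 using c
    by (cases "c2 = c") simp_all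
qed


definition D1 :: "bitstr \<Rightarrow> (qreg \<times> nat \<Rightarrow> complex) \<Rightarrow> qreg \<times> nat \<Rightarrow> complex" where
  "D1 z \<phi> x = (case x of ((c, a, i, s', b), j) \<Rightarrow>
     if c = 1 \<and> s' = z then \<phi> ((1, a, i, z, \<not> b), j) - \<phi> x else 0)"

definition D3 :: "nat \<Rightarrow> bitstr \<Rightarrow> (qreg \<times> nat \<Rightarrow> complex) \<Rightarrow> qreg \<times> nat \<Rightarrow> complex" where
  "D3 n z \<phi> x = (case x of ((c, a, i, s', b), j) \<Rightarrow>
     if c = 3 then (\<Sum>s\<in>bitstrs n. complex_of_real (dvec n (S0 n) s' * dvec n (S0 n) s
        - dvec n (insert z (S0 n)) s' * dvec n (insert z (S0 n)) s) * \<phi> ((3, a, i, s, b), j)) else 0)"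

definition D5 :: "nat \<Rightarrow> bitstr \<Rightarrow> (qreg \<times> nat \<Rightarrow> complex) \<Rightarrow> qreg \<times> nat \<Rightarrow> complex" where
  "D5 n z \<phi> x = (case x of ((c, a, i, s', b), j) \<Rightarrow>
     if c = 5 then (\<Sum>s\<in>bitstrs n. complex_of_real (unif_amp (insert z (S0 n)) s' * unif_amp (insert z (S0 n)) s
        - unif_amp (S0 n) s' * unif_amp (S0 n) s) * (\<phi> ((5, a, i, s, \<not> b), j) - \<phi> ((5, a, i, s, b), j))) else 0)"

lemma decomp:
  assumes n: "n \<ge> 1" and mn: "n \<le> m" and z: "z \<in> Zs n" and x: "x \<in> full_basis n m w"
  shows "apply_op (full_basis n m w) (full_oracle n m (insert z (S0 n)) (bitstrs m) Mx) \<phi> x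
       - apply_op (full_basis n m w) (full_oracle n m (S0 n) (bitstrs m) Mx) \<phi> x
       = D1 z \<phi> x + D3 n z \<phi> x + D5 n z \<phi> x"
proof -
  obtain c a i s' b j where xe: "x = ((c, a, i, s', b), j)" by (cases x) auto
  let ?Sz = "insert z (S0 n)" and ?S0 = "S0 n" and ?B = "full_basis n m w"
  have zS0: "z \<notin> S0 n" by (rule Zs_S0[OF z])
  have Sz_sub: "?Sz \<subseteq> bitstrs n" using S0_sub Zs_len[OF z] by auto
  have z0z: "replicate n False \<notin> ?Sz" using z0_S0 z0_Zs z by auto
  consider "c = 1" | "c = 3" | "c = 5" | "c \<noteq> 1" "c \<noteq> 3" "c \<noteq> 5" by blast
  then show ?thesis
  proof cases
    case 1
    have a1: "apply_op ?B (full_oracle n m S (bitstrs m) Mx) \<phi> x = \<phi> ((1, a, i, s', b \<noteq> (s' \<in> S)), j)" for S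
      unfolding xe 1 by (rule AP1) (use x xe 1 in simp)
    show ?thesis unfolding a1 using zS0
      by (cases "s' = z") (auto simp: xe 1 D1_def D3_def D5_def)
  next
    case 2
    note C3 = 2
    have a3: "apply_op ?B (full_oracle n m S (bitstrs m) Mx) \<phi> x =
       (\<Sum>s\<in>bitstrs n. prep_kernel (bitstrs n) (replicate n False) S s' s * \<phi> ((3, a, i, s, b), j))" for S
      unfolding xe C3 by (rule AP3) (use x xe C3 in simp)
    have pz: "prep_kernel (bitstrs n) (replicate n False) ?Sz s' s = delta s' s - complex_of_real (dvec n ?Sz s' * dvec n ?Sz s)" for s
      by (rule prep_simp[OF Sz_sub]) (use z0z in auto)
    have p0: "prep_kernel (bitstrs n) (replicate n False) ?S0 s' s = delta s' s - complex_of_real (dvec n ?S0 s' * dvec n ?S0 s)" for s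
      by (rule prep_simp[OF S0_sub S0_ne[OF n] z0_S0])
    show ?thesis unfolding a3 pz p0 sum_subtractf[symmetric]
      by (simp add: xe C3 D1_def D3_def D5_def algebra_simps)
  next
    case 3
    note C5 = 3
    have a5: "apply_op ?B (full_oracle n m S (bitstrs m) Mx) \<phi> x =
       (\<Sum>s\<in>bitstrs n. proj_kernel S s' s * \<phi> ((5, a, i, s, \<not> b), j)
        + (delta s' s - proj_kernel S s' s) * \<phi> ((5, a, i, s, b), j))" for S
      unfolding xe C5 by (rule AP5) (use x xe C5 in simp)
    show ?thesis unfolding a5 sum_subtractf[symmetric]
      by (simp add: xe C5 D1_def D3_def D5_def proj_kernel_def algebra_simps)
  next
    case 4
    have "apply_op ?B (full_oracle n m ?Sz (bitstrs m) Mx) \<phi> x = apply_op ?B (full_oracle n m ?S0 (bitstrs m) Mx) \<phi> x"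
      unfolding apply_op_def xe using FO_eq_other[OF mn z 4] by simp
    then show ?thesis using 4 by (simp add: xe D1_def D3_def D5_def)
  qed
qed

lemma sqdiff: "(cmod (a - b))^2 \<le> 2 * (cmod a)^2 + 2 * (cmod b)^2"
proof -
  have "cmod (a - b) \<le> cmod a + cmod b" by (rule norm_triangle_ineq4)
  then have "(cmod (a - b))^2 \<le> (cmod a + cmod b)^2" by (intro power_mono) auto
  also have "\<dots> \<le> 2 * (cmod a)^2 + 2 * (cmod b)^2"
  proof -
    have "2 * (cmod a)^2 + 2 * (cmod b)^2 - (cmod a + cmod b)^2 = (cmod a - cmod b)^2"
      by (simp add: power2_eq_square algebra_simps)
    then show ?thesis using zero_le_power2[of "cmod a - cmod b"] by linarith
  qed
  finally show ?thesis .
qed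

lemma nrm_sq_emb: "(nrm (full_basis n m w) \<phi>)^2 = (\<Sum>r\<in>Rset m w. \<Sum>s\<in>bitstrs n. (cmod (\<phi> (emb r s)))^2)"
  by (simp add: nrm_sq sum_emb)

lemma D1_bound:
  assumes z: "length z = n"
  shows "(nrm (full_basis n m w) (D1 z \<phi>))^2 \<le> 4 * (\<Sum>r\<in>Rset m w. (cmod (\<phi> (emb r z)))^2)"
proof -
  let ?R = "Rset m w"
  have blk: "(\<Sum>s\<in>bitstrs n. (cmod (D1 z \<phi> (emb r s)))^2)
      \<le> 2 * (cmod (\<phi> (emb (flipr r) z)))^2 + 2 * (cmod (\<phi> (emb r z)))^2" for r
  proof -
    obtain c a i b j where r: "r = (c, a, i, b, j)" by (cases r) auto
    have "(\<Sum>s\<in>bitstrs n. (cmod (D1 z \<phi> (emb r s)))^2) = (cmod (D1 z \<phi> (emb r z)))^2"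
      by (rule sum_single) (use z in \<open>auto simp: r D1_def\<close>)
    also have "\<dots> \<le> 2 * (cmod (\<phi> (emb (flipr r) z)))^2 + 2 * (cmod (\<phi> (emb r z)))^2"
      using sqdiff[of "\<phi> (emb (flipr r) z)" "\<phi> (emb r z)"] by (auto simp: r D1_def)
    finally show ?thesis .
  qed
  have "(nrm (full_basis n m w) (D1 z \<phi>))^2 = (\<Sum>r\<in>?R. \<Sum>s\<in>bitstrs n. (cmod (D1 z \<phi> (emb r s)))^2)"
    by (rule nrm_sq_emb)
  also have "\<dots> \<le> (\<Sum>r\<in>?R. 2 * (cmod (\<phi> (emb (flipr r) z)))^2 + 2 * (cmod (\<phi> (emb r z)))^2)"
    by (rule sum_mono) (rule blk)
  also have "\<dots> = 2 * (\<Sum>r\<in>?R. (cmod (\<phi> (emb (flipr r) z)))^2) + 2 * (\<Sum>r\<in>?R. (cmod (\<phi> (emb r z)))^2)"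
    by (simp add: sum.distrib sum_distrib_left)
  also have "(\<Sum>r\<in>?R. (cmod (\<phi> (emb (flipr r) z)))^2) = (\<Sum>r\<in>?R. (cmod (\<phi> (emb r z)))^2)"
    using sum.reindex_bij_betw[OF flipr_bij, of "\<lambda>r. (cmod (\<phi> (emb r z)))^2"] by simp
  finally show ?thesis by simp
qed

lemma D1_sum_bound:
  assumes "Z \<subseteq> bitstrs n"
  shows "(\<Sum>z\<in>Z. \<Sum>r\<in>Rset m w. (cmod (\<phi> (emb r z)))^2) \<le> (nrm (full_basis n m w) \<phi>)^2"
proof -
  have "(\<Sum>z\<in>Z. \<Sum>r\<in>Rset m w. (cmod (\<phi> (emb r z)))^2) = (\<Sum>r\<in>Rset m w. \<Sum>z\<in>Z. (cmod (\<phi> (emb r z)))^2)"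
    by (rule sum.swap)
  also have "\<dots> \<le> (\<Sum>r\<in>Rset m w. \<Sum>s\<in>bitstrs n. (cmod (\<phi> (emb r s)))^2)"
    by (intro sum_mono sum_mono2) (use assms in auto)
  finally show ?thesis by (simp add: nrm_sq_emb)
qed

lemma nrm_sq_X: "(nrm X \<psi>)^2 = (\<Sum>s\<in>X. (cmod (\<psi> s))^2)" if "finite X"
  using nrm_sq[OF that] .

lemma D3_bound:
  fixes n :: nat and z :: bitstr
  defines "v \<equiv> dvec n (S0 n)" and "u \<equiv> dvec n (insert z (S0 n))"
  defines "L \<equiv> L2_set (\<lambda>s. v s - u s) (bitstrs n) * (L2_set v (bitstrs n) + L2_set u (bitstrs n))"
  shows "nrm (full_basis n m w) (D3 n z \<phi>) \<le> sqrt 2 * L * nrm (full_basis n m w) \<phi>"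
proof (rule block_bound[OF _ flipr_bij])
  show "0 \<le> L" unfolding L_def by simp
  fix r assume "r \<in> Rset m w"
  obtain c a i b j where r: "r = (c, a, i, b, j)" by (cases r) auto
  let ?X = "bitstrs n"
  let ?A = "\<Sum>s\<in>?X. (cmod (\<phi> (emb r s)))^2" and ?F = "\<Sum>s\<in>?X. (cmod (\<phi> (emb (flipr r) s)))^2"
  have F: "0 \<le> ?F" by (simp add: sum_nonneg)
  show "(\<Sum>s\<in>?X. (cmod (D3 n z \<phi> (emb r s)))^2) \<le> L^2 * (?A + ?F)"
  proof (cases "c = 3")
    case False
    then show ?thesis by (simp add: r D3_def sum_nonneg)
  next
    case True
    let ?\<psi> = "\<lambda>s. \<phi> (emb r s)"
    have "(\<Sum>s'\<in>?X. (cmod (D3 n z \<phi> (emb r s')))^2)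
        = (nrm ?X (\<lambda>s'. \<Sum>s\<in>?X. complex_of_real (v s' * v s - u s' * u s) * ?\<psi> s))^2"
      by (simp add: nrm_sq r True D3_def v_def u_def)
    also have "\<dots> \<le> (L * nrm ?X ?\<psi>)^2"
      by (rule sq_le_of_le[OF nrm_nonneg]) (unfold L_def, rule rank1_bound)
    also have "\<dots> = L^2 * ?A" by (simp add: power_mult_distrib nrm_sq)
    also have "\<dots> \<le> L^2 * (?A + ?F)" using F by (intro mult_left_mono) auto
    finally show ?thesis .
  qed
qed

lemma D5_bound:
  fixes n :: nat and z :: bitstr
  defines "v \<equiv> unif_amp (insert z (S0 n))" and "u \<equiv> unif_amp (S0 n)"
  defines "L \<equiv> L2_set (\<lambda>s. v s - u s) (bitstrs n) * (L2_set v (bitstrs n) + L2_set u (bitstrs n))"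
  shows "nrm (full_basis n m w) (D5 n z \<phi>) \<le> sqrt 2 * (sqrt 2 * L) * nrm (full_basis n m w) \<phi>"
proof (rule block_bound[OF _ flipr_bij])
  show "0 \<le> sqrt 2 * L" unfolding L_def by simp
  fix r assume "r \<in> Rset m w"
  obtain c a i b j where r: "r = (c, a, i, b, j)" by (cases r) auto
  let ?X = "bitstrs n"
  let ?A = "\<Sum>s\<in>?X. (cmod (\<phi> (emb r s)))^2" and ?F = "\<Sum>s\<in>?X. (cmod (\<phi> (emb (flipr r) s)))^2"
  show "(\<Sum>s\<in>?X. (cmod (D5 n z \<phi> (emb r s)))^2) \<le> (sqrt 2 * L)^2 * (?A + ?F)"
  proof (cases "c = 5")
    case False
    then show ?thesis by (simp add: r D5_def sum_nonneg)
  next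
    case True
    let ?\<psi> = "\<lambda>s. \<phi> (emb (flipr r) s) - \<phi> (emb r s)"
    have "(\<Sum>s'\<in>?X. (cmod (D5 n z \<phi> (emb r s')))^2)
        = (nrm ?X (\<lambda>s'. \<Sum>s\<in>?X. complex_of_real (v s' * v s - u s' * u s) * ?\<psi> s))^2"
      by (simp add: nrm_sq r True D5_def v_def u_def)
    also have "\<dots> \<le> (L * nrm ?X ?\<psi>)^2"
      by (rule sq_le_of_le[OF nrm_nonneg]) (unfold L_def, rule rank1_bound)
    also have "\<dots> = L^2 * (\<Sum>s\<in>?X. (cmod (?\<psi> s))^2)" by (simp add: power_mult_distrib nrm_sq)
    also have "\<dots> \<le> L^2 * (\<Sum>s\<in>?X. 2 * (cmod (\<phi> (emb (flipr r) s)))^2 + 2 * (cmod (\<phi> (emb r s)))^2)"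
      by (intro mult_left_mono sum_mono sqdiff) auto
    also have "\<dots> = (sqrt 2 * L)^2 * (?A + ?F)"
      by (simp add: sum.distrib sum_distrib_left[symmetric] power_mult_distrib algebra_simps)
    finally show ?thesis .
  qed
qed

lemma L2_unif: "finite X \<Longrightarrow> A \<subseteq> X \<Longrightarrow> A \<noteq> {} \<Longrightarrow> L2_set (unif_amp A) X = 1"
  unfolding L2_set_def using unif_sq_sum by simp

lemma L2_dvec: "S \<subseteq> bitstrs n \<Longrightarrow> S \<noteq> {} \<Longrightarrow> replicate n False \<notin> S \<Longrightarrow> L2_set (dvec n S) (bitstrs n) = sqrt 2"
  unfolding L2_set_def using dvec_sq by simp

lemma delta_sq:
  assumes n: "n \<ge> 1" and z: "z \<in> Zs n"
  shows "(\<Sum>s\<in>bitstrs n. (unif_amp (insert z (S0 n)) s - unif_amp (S0 n) s)^2) \<le> 2 / real (2 ^ (n - 1))"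
proof -
  define N where "N = real (card (S0 n))"
  have N: "N = 2 ^ (n - 1)" using card_S0[OF n] by (simp add: N_def)
  have Npos: "N > 0" using N by simp
  have zS: "z \<notin> S0 n" by (rule Zs_S0[OF z])
  have cz: "real (card (insert z (S0 n))) = N + 1" using zS by (simp add: N_def)
  define g where "g s = (if s \<in> S0 n then 1 / N - 1 / (N + 1) else if s = z then 1 / (N + 1) else 0)" for s
  have pw: "(unif_amp (insert z (S0 n)) s - unif_amp (S0 n) s)^2 \<le> g s" for s
  proof (cases "s \<in> S0 n")
    case True
    define a where "a = 1 / sqrt N"
    define b where "b = 1 / sqrt (N + 1)"
    have ab: "0 \<le> b" "b \<le> a" using Npos by (auto simp: a_def b_def intro!: divide_left_mono)
    have a2: "a^2 = 1 / N" using Npos by (simp add: a_def power_divide)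
    have b2: "b^2 = 1 / (N + 1)" using Npos by (simp add: b_def power_divide)
    have "(b - a)^2 \<le> a^2 - b^2"
    proof -
      have "a^2 - b^2 - (b - a)^2 = 2 * b * (a - b)" by (simp add: power2_eq_square algebra_simps)
      moreover have "0 \<le> 2 * b * (a - b)" using ab by simp
      ultimately show ?thesis by linarith
    qed
    moreover have "unif_amp (insert z (S0 n)) s = b" using True cz by (simp add: unif_amp_def b_def)
    moreover have "unif_amp (S0 n) s = a" using True by (simp add: unif_amp_def a_def N_def)
    moreover have "g s = a^2 - b^2" using True by (simp add: g_def a2 b2)
    ultimately show ?thesis by simp
  next
    case False
    then show ?thesis using cz by (auto simp: unif_amp_def g_def power_divide)
  qed
  have "(\<Sum>s\<in>bitstrs n. (unif_amp (insert z (S0 n)) s - unif_amp (S0 n) s)^2) \<le> (\<Sum>s\<in>bitstrs n. g s)"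
    by (rule sum_mono) (rule pw)
  also have "(\<Sum>s\<in>bitstrs n. g s) = (\<Sum>s\<in>S0 n. g s) + (\<Sum>s\<in>{z}. g s)"
  proof -
    have sub: "insert z (S0 n) \<subseteq> bitstrs n" using S0_sub Zs_len[OF z] by auto
    have "(\<Sum>s\<in>bitstrs n. g s) = (\<Sum>s\<in>insert z (S0 n). g s)"
      using sub by (intro sum.mono_neutral_right) (auto simp: g_def)
    also have "\<dots> = (\<Sum>s\<in>S0 n. g s) + (\<Sum>s\<in>{z}. g s)" using zS by simp
    finally show ?thesis .
  qed
  also have "\<dots> = N * (1 / N - 1 / (N + 1)) + 1 / (N + 1)"
    using zS by (simp add: g_def N_def)
  also have "\<dots> = 2 / (N + 1)"
  proof -
    have h: "N * (1 / N - 1 / (N + 1)) = 1 / (N + 1)"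
    proof -
      have "N * (1 / N - 1 / (N + 1)) = N * (1 / N) - N * (1 / (N + 1))" by (simp add: right_diff_distrib)
      also have "\<dots> = 1 - N / (N + 1)" using Npos by simp
      also have "\<dots> = 1 / (N + 1)"
      proof -
        have ne: "N + 1 \<noteq> 0" using Npos by simp
        show ?thesis using ne by (simp add: field_simps)
      qed
      finally show ?thesis .
    qed
    show ?thesis unfolding h by (simp add: add_divide_distrib[symmetric])
  qed
  also have "\<dots> \<le> 2 / N" using Npos by (simp add: frac_le)
  finally show ?thesis using N by simp
qed

lemma step_bound:
  assumes n: "n \<ge> 1" and mn: "n \<le> m" and z: "z \<in> Zs n" and \<phi>: "nrm (full_basis n m w) \<phi> = 1"
  shows "nrm (full_basis n m w) (\<lambda>x. apply_op (full_basis n m w) (full_oracle n m (insert z (S0 n)) (bitstrs m) Mx) \<phi> x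
       - apply_op (full_basis n m w) (full_oracle n m (S0 n) (bitstrs m) Mx) \<phi> x)
     \<le> nrm (full_basis n m w) (D1 z \<phi>) + 8 * sqrt (2 / real (2 ^ (n - 1)))"
proof -
  let ?B = "full_basis n m w" and ?X = "bitstrs n"
  define \<delta> where "\<delta> = L2_set (\<lambda>s. unif_amp (insert z (S0 n)) s - unif_amp (S0 n) s) ?X"
  have \<delta>0: "0 \<le> \<delta>" by (simp add: \<delta>_def)
  have \<delta>b: "\<delta> \<le> sqrt (2 / real (2 ^ (n - 1)))"
    unfolding \<delta>_def L2_set_def by (intro real_sqrt_le_mono delta_sq[OF n z])
  have sub: "insert z (S0 n) \<subseteq> ?X" using S0_sub Zs_len[OF z] by auto
  have z0z: "replicate n False \<notin> insert z (S0 n)" using z0_S0 z0_Zs z by auto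
  have dd: "L2_set (\<lambda>s. dvec n (S0 n) s - dvec n (insert z (S0 n)) s) ?X = \<delta>"
    unfolding \<delta>_def by (rule L2_set_cong) (auto simp: dvec_def)
  have L3: "sqrt 2 * (L2_set (\<lambda>s. dvec n (S0 n) s - dvec n (insert z (S0 n)) s) ?X *
         (L2_set (dvec n (S0 n)) ?X + L2_set (dvec n (insert z (S0 n))) ?X)) = 4 * \<delta>"
    unfolding dd L2_dvec[OF S0_sub S0_ne[OF n] z0_S0] L2_dvec[OF sub insert_not_empty z0z] by simp
  have L5: "sqrt 2 * (sqrt 2 * (L2_set (\<lambda>s. unif_amp (insert z (S0 n)) s - unif_amp (S0 n) s) ?X *
         (L2_set (unif_amp (insert z (S0 n))) ?X + L2_set (unif_amp (S0 n)) ?X))) = 4 * \<delta>"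
    unfolding \<delta>_def[symmetric] L2_unif[OF finite_bitstrs sub insert_not_empty] L2_unif[OF finite_bitstrs S0_sub S0_ne[OF n]] by simp
  have "nrm ?B (\<lambda>x. apply_op ?B (full_oracle n m (insert z (S0 n)) (bitstrs m) Mx) \<phi> x
       - apply_op ?B (full_oracle n m (S0 n) (bitstrs m) Mx) \<phi> x)
      = nrm ?B (\<lambda>x. (D1 z \<phi> x + D3 n z \<phi> x) + D5 n z \<phi> x)"
    by (rule nrm_cong) (simp add: decomp[OF n mn z])
  also have "\<dots> \<le> nrm ?B (D1 z \<phi>) + nrm ?B (D3 n z \<phi>) + nrm ?B (D5 n z \<phi>)"
    using nrm_add[of ?B "\<lambda>x. D1 z \<phi> x + D3 n z \<phi> x" "D5 n z \<phi>"] nrm_add[of ?B "D1 z \<phi>" "D3 n z \<phi>"] by linarith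
  also have "\<dots> \<le> nrm ?B (D1 z \<phi>) + 4 * \<delta> + 4 * \<delta>"
    using D3_bound[where n=n and z=z and m=m and w=w and \<phi>=\<phi>] D5_bound[where n=n and z=z and m=m and w=w and \<phi>=\<phi>] L3 L5 \<phi> by (intro add_mono) simp_all
  also have "\<dots> \<le> nrm ?B (D1 z \<phi>) + 8 * sqrt (2 / real (2 ^ (n - 1)))"
    using \<delta>b by simp
  finally show ?thesis .
qed

lemma per_z:
  assumes n: "n \<ge> 2" and mn: "n \<le> m" and z: "z \<in> Zs n"
    and sol: "solves_multiple_components n m w T U Acc"
  shows "1/6 \<le> (\<Sum>k<T. nrm (full_basis n m w) (D1 z (run_state n m w U (S0 n) (bitstrs m) Mx k)))
              + real T * (8 * sqrt (2 / real (2 ^ (n - 1))))"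
proof -
  let ?B = "full_basis n m w" and ?I = "bitstrs m" and ?Sz = "insert z (S0 n)" and ?S0 = "S0 n"
  have n1: "n \<ge> 1" using n by simp
  have w: "0 < w" and UU: "\<And>k. k \<le> T \<Longrightarrow> unitary_on ?B (U k)" and Acc: "Acc \<subseteq> ?B"
    using sol by (auto simp: solves_multiple_components_def)
  have yes: "accept_prob n m w T U Acc ?Sz ?I Mx \<ge> 2/3"
    using sol cm_yes[OF n1 mn z] card_P_yes[OF n1 z] by (auto simp: solves_multiple_components_def)
  have no: "accept_prob n m w T U Acc ?S0 ?I Mx \<le> 1/3"
    using sol cm_no[OF n1 mn] by (auto simp: solves_multiple_components_def)
  have Oz: "unitary_on ?B (full_oracle n m ?Sz ?I Mx)" by (rule FO_unitary) (use z mn n1 in auto)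
  have O0: "unitary_on ?B (full_oracle n m ?S0 ?I Mx)" by (rule FO_unitary) (use mn n1 in auto)
  let ?pz = "run_state n m w U ?Sz ?I Mx" and ?p0 = "run_state n m w U ?S0 ?I Mx"
  have nz: "nrm ?B (?pz T) = 1" by (rule run_nrm[OF w UU Oz]) auto
  have n0: "\<And>k. k \<le> T \<Longrightarrow> nrm ?B (?p0 k) = 1" by (rule run_nrm[OF w UU O0])
  have "1/6 \<le> nrm ?B (\<lambda>x. ?pz T x - ?p0 T x)"
    by (rule accept_gap[OF finite_full_basis Acc nz n0[OF order_refl]])
       (use yes no in \<open>simp add: accept_prob_def\<close>)
  also have "\<dots> \<le> (\<Sum>k<T. nrm ?B (\<lambda>x. apply_op ?B (full_oracle n m ?Sz ?I Mx) (?p0 k) x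
           - apply_op ?B (full_oracle n m ?S0 ?I Mx) (?p0 k) x))"
    by (rule hybrid[OF UU Oz]) auto
  also have "\<dots> \<le> (\<Sum>k<T. nrm ?B (D1 z (?p0 k)) + 8 * sqrt (2 / real (2 ^ (n - 1))))"
    by (intro sum_mono step_bound[OF n1 mn z] n0) auto
  also have "\<dots> = (\<Sum>k<T. nrm ?B (D1 z (?p0 k))) + real T * (8 * sqrt (2 / real (2 ^ (n - 1))))"
    by (simp add: sum.distrib)
  finally show ?thesis .
qed

lemma D1_avg:
  assumes n: "n \<ge> 1" and \<phi>: "nrm (full_basis n m w) \<phi> = 1"
  shows "(\<Sum>z\<in>Zs n. nrm (full_basis n m w) (D1 z \<phi>)) \<le> 2 * sqrt (real (card (Zs n)))"
proof -
  let ?f = "\<lambda>z. nrm (full_basis n m w) (D1 z \<phi>)"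
  have "(\<Sum>z\<in>Zs n. ?f z) = (\<Sum>z\<in>Zs n. \<bar>1\<bar> * \<bar>?f z\<bar>)" by simp
  also have "\<dots> \<le> L2_set (\<lambda>_. 1) (Zs n) * L2_set ?f (Zs n)" by (rule L2_set_mult_ineq)
  also have "L2_set (\<lambda>_. 1::real) (Zs n) = sqrt (real (card (Zs n)))" by (simp add: L2_set_constant)
  finally have A: "(\<Sum>z\<in>Zs n. ?f z) \<le> sqrt (real (card (Zs n))) * L2_set ?f (Zs n)" .
  have B: "L2_set ?f (Zs n) \<le> 2"
  proof -
    have "(\<Sum>z\<in>Zs n. (?f z)^2) \<le> (\<Sum>z\<in>Zs n. 4 * (\<Sum>r\<in>Rset m w. (cmod (\<phi> (emb r z)))^2))"
      by (intro sum_mono D1_bound) (simp add: Zs_len)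
    also have "\<dots> = 4 * (\<Sum>z\<in>Zs n. \<Sum>r\<in>Rset m w. (cmod (\<phi> (emb r z)))^2)" by (simp add: sum_distrib_left)
    also have "\<dots> \<le> 4 * (nrm (full_basis n m w) \<phi>)^2"
      by (intro mult_left_mono D1_sum_bound) (auto simp: Zs_def)
    finally have "(\<Sum>z\<in>Zs n. (?f z)^2) \<le> 4" using \<phi> by simp
    then have "sqrt (\<Sum>z\<in>Zs n. (?f z)^2) \<le> sqrt 4" by (rule real_sqrt_le_mono)
    moreover have "sqrt (4::real) = 2" by (simp add: real_sqrt_eq_iff)
    ultimately show ?thesis unfolding L2_set_def by simp
  qed
  have "sqrt (real (card (Zs n))) * L2_set ?f (Zs n) \<le> sqrt (real (card (Zs n))) * 2"
    by (rule mult_left_mono[OF B]) simp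
  then show ?thesis using A by (simp add: mult.commute)
qed

lemma arith_final:
  fixes K T P G :: real
  assumes K: "K > 0" and P: "P > 0" and PK: "P^2 \<le> 4 * K" and G: "G = 16 / P" and T: "T \<ge> 0"
    and main: "K / 6 \<le> T * (2 * sqrt K + K * G)"
  shows "T \<ge> P / 120"
proof -
  define s where "s = sqrt K"
  have s: "s > 0" using K by (simp add: s_def)
  have sK: "s * s = K" using K by (simp add: s_def)
  have Ps: "P \<le> 2 * s"
  proof -
    have e: "(2 * s)^2 = 4 * K" unfolding sK[symmetric] by (simp only: power2_eq_square mult_ac)
    have "P^2 \<le> (2 * s)^2" unfolding e by (rule PK)
    then show ?thesis by (rule power2_le_imp_le) (use s in simp)
  qed
  have h1: "(K / 6) * P \<le> (T * (2 * s + K * G)) * P"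
    using main P unfolding s_def by (intro mult_right_mono) auto
  have e1: "(T * (2 * s + K * G)) * P = T * (2 * s * P + 16 * K)"
  proof -
    have kg: "K * G * P = 16 * K" using P unfolding G by simp
    have "(T * (2 * s + K * G)) * P = T * ((2 * s + K * G) * P)" by (rule mult.assoc)
    also have "(2 * s + K * G) * P = 2 * s * P + K * G * P" by (rule distrib_right)
    finally show ?thesis unfolding kg .
  qed
  have h2: "2 * s * P \<le> 4 * K"
  proof -
    have "2 * s * P \<le> 2 * s * (2 * s)" using Ps s by (intro mult_left_mono) auto
    then show ?thesis using sK by simp
  qed
  have h3: "T * (2 * s * P + 16 * K) \<le> T * (20 * K)"
    using h2 T by (intro mult_left_mono) auto
  have "K * (P / 6) = (K / 6) * P" by simp
  also have "\<dots> \<le> (T * (2 * s + K * G)) * P" by (rule h1)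
  also have "\<dots> = T * (2 * s * P + 16 * K)" by (rule e1)
  also have "\<dots> \<le> T * (20 * K)" by (rule h3)
  also have "\<dots> = K * (20 * T)" by simp
  finally have "P / 6 \<le> 20 * T" using K by simp
  then show ?thesis by simp
qed

lemma main_bound:
  assumes n: "2 \<le> n" and mn: "n \<le> m" and sol: "solves_multiple_components n m w T U Acc"
  shows "1 / 120 * 2 powr (real n / 2) \<le> real T"
proof -
  have n1: "n \<ge> 1" using n by simp
  let ?B = "full_basis n m w" and ?I = "bitstrs m"
  let ?p0 = "run_state n m w U (S0 n) ?I Mx"
  define G where "G = 8 * sqrt (2 / real (2 ^ (n - 1)))"
  define K where "K = real (card (Zs n))"
  define P where "P = 2 powr (real n / 2)"
  have w: "0 < w" and UU: "\<And>k. k \<le> T \<Longrightarrow> unitary_on ?B (U k)"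
    using sol by (auto simp: solves_multiple_components_def)
  have O0: "unitary_on ?B (full_oracle n m (S0 n) ?I Mx)" by (rule FO_unitary) (use mn n1 in auto)
  have n0: "\<And>k. k \<le> T \<Longrightarrow> nrm ?B (?p0 k) = 1" by (rule run_nrm[OF w UU O0])
  let ?F = "\<lambda>k z. nrm ?B (D1 z (?p0 k))"
  have "(\<Sum>z\<in>Zs n. 1/6) \<le> (\<Sum>z\<in>Zs n. (\<Sum>k<T. ?F k z) + real T * G)"
    unfolding G_def by (intro sum_mono per_z[OF n mn _ sol])
  also have "\<dots> = (\<Sum>z\<in>Zs n. \<Sum>k<T. ?F k z) + (\<Sum>z\<in>Zs n. real T * G)"
    by (rule sum.distrib)
  also have "(\<Sum>z\<in>Zs n. \<Sum>k<T. ?F k z) = (\<Sum>k<T. \<Sum>z\<in>Zs n. ?F k z)"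
    by (rule sum.swap)
  also have "(\<Sum>z\<in>Zs n. real T * G) = K * (real T * G)"
    unfolding K_def by (rule sum_constant)
  also have "(\<Sum>k<T. \<Sum>z\<in>Zs n. ?F k z) \<le> (\<Sum>k<T. 2 * sqrt K)"
    unfolding K_def by (intro sum_mono D1_avg[OF n1] n0) auto
  also have "(\<Sum>k<T. 2 * sqrt K) = real T * (2 * sqrt K)"
    by simp
  also have "(\<Sum>z\<in>Zs n. (1::real)/6) = K * (1/6)"
    unfolding K_def by (rule sum_constant)
  finally have m1: "K * (1/6) \<le> real T * (2 * sqrt K) + K * (real T * G)" by simp
  have main0: "K / 6 \<le> real T * (2 * sqrt K + K * G)"
  proof -
    have "real T * (2 * sqrt K + K * G) = real T * (2 * sqrt K) + K * (real T * G)"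
      by (simp only: distrib_left mult_ac)
    then show ?thesis using m1 by simp
  qed
  define X where "X = (2::real) ^ (n - 1)"
  have P0: "P > 0" by (simp add: P_def)
  have P2: "P^2 = 2 ^ n"
  proof -
    have "P^2 = P * P" by (simp add: power2_eq_square)
    also have "\<dots> = 2 powr (real n / 2 + real n / 2)" by (simp only: P_def powr_add[symmetric])
    also have "\<dots> = 2 powr (real n)" by simp
    also have "\<dots> = 2 ^ n" by (simp add: powr_realpow)
    finally show ?thesis .
  qed
  have pn: "(2::real) ^ n = 2 * X" unfolding X_def using n1 by (cases n) simp_all
  have pn4: "X \<ge> 2"
  proof -
    have "(2::real) ^ 1 \<le> 2 ^ (n - 1)" using n by (intro power_increasing) auto
    then show ?thesis by (simp add: X_def)
  qed
  have Kv: "K = X - 1"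
  proof -
    have c: "card (Zs n) = 2 ^ (n - 1) - 1" by (rule card_Zs[OF n1])
    have "(1::nat) \<le> 2 ^ (n - 1)" by simp
    then have "real (2 ^ (n - 1) - 1 :: nat) = real (2 ^ (n - 1) :: nat) - 1" by (simp add: of_nat_diff)
    then show ?thesis unfolding K_def c X_def by simp
  qed
  have K0: "K > 0" using Kv pn4 by linarith
  have PK: "P^2 \<le> 4 * K" using P2 pn Kv pn4 by linarith
  have GP: "G = 16 / P"
  proof -
    have "(2 / P)^2 = 4 / P^2" by (simp add: power_divide)
    also have "\<dots> = 2 / X" unfolding P2 pn using pn4 by simp
    finally have e: "2 / X = (2 / P)^2" by simp
    have "sqrt (2 / real (2 ^ (n - 1) :: nat)) = sqrt ((2 / P)^2)" unfolding e[symmetric] X_def by simp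
    also have "\<dots> = 2 / P" using P0 by simp
    finally show ?thesis unfolding G_def by simp
  qed
  have "real T \<ge> P / 120" by (rule arith_final[OF K0 P0 PK GP _ main0]) simp
  then show ?thesis by (simp add: P_def)
qed

theorem mainTheorem10:
  shows "\<exists>c>0. \<exists>N d. \<forall>n\<ge>N. \<forall>m\<ge>n ^ d. \<forall>w T U Acc.
           solves_multiple_components n m w T U Acc \<longrightarrow> real T \<ge> c * 2 powr (real n / 2)"
proof -
  have "\<forall>n\<ge>2. \<forall>m\<ge>n ^ 1. \<forall>w T U Acc.
           solves_multiple_components n m w T U Acc \<longrightarrow> real T \<ge> 1 / 120 * 2 powr (real n / 2)"
    using main_bound by auto
  then show ?thesis
    apply -
    apply (rule exI[where x = "1/120::real"], rule conjI, simp)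
    apply (rule exI[where x = "2::nat"], rule exI[where x = "1::nat"])
    apply assumption
    done
qed

end
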